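(* In the setting below, with $\mathcal{S}=\{j_1<\dots<j_s\}$ and $A=(\mathrm{Id}-B_{j_s})\cdots(\mathrm{Id}-B_{j_1})$, we have $\|A\|_2<1$.
   Context: Setting: $f:\mathbb{R}^p\to\mathbb{R}$ convex, differentiable with Lipschitz gradient; $g_j:\mathbb{R}\to\mathbb{R}\cup\{+\infty\}$ proper closed convex; $x^\star$ a minimizer of $f(x)+\sum_jg_j(x_j)$; $\mathcal{S}=\{j:\partial g_j(x^\star_j)\text{ is a singleton}\}$; $g_j$ is $\mathcal{C}^2$ near $x^\star_j$ for $j\in\mathcal{S}$, $f$ is $\mathcal{C}^2$ near $x^\star$, and $\nabla^2_{\mathcal{S},\mathcal{S}}f(x^\star)\succ0$. Step sizes $0<\gamma_j\le1/L_j$, $L_j$ the coordinatewise Lipschitz constant of $\nabla_jf$. For $j\in\mathcal{S}$, $z^\star_j=x^\star_j-\gamma_j\nabla_jf(x^\star)$, $p_j>0$ the derivative of $\operatorname{prox}_{\gamma_jg_j}$ at $z^\star_j$, $u_j=\frac1{\gamma_jp_j}-\frac1{\gamma_j}$, $M=\nabla^2_{\mathcal{S},\mathcal{S}}f(x^\star)+\operatorname{diag}(u)$ (symmetric positive definite), $M^{1/2}$ its symmetric square root, and $B_j=\gamma_jp_j\,M^{1/2}_{:,j}(M^{1/2}_{:,j})^\top\in\mathbb{R}^{s\times s}$. $\|\cdot\|_2$ is the spectral norm. *)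

theory Defs
  imports "HOL-Analysis.Analysis" "Jordan_Normal_Form.Matrix"
begin

text \<open>Functions g : R -> R \<union> {+inf} are modelled as real => ereal.\<close>

definition proper_fun :: "(real \<Rightarrow> ereal) \<Rightarrow> bool" where
  "proper_fun g \<longleftrightarrow> (\<forall>x. g x \<noteq> -\<infinity>) \<and> (\<exists>x. g x \<noteq> \<infinity>)"

text \<open>closed = lower semicontinuous = closed epigraph\<close>
definition closed_fun :: "(real \<Rightarrow> ereal) \<Rightarrow> bool" where
  "closed_fun g \<longleftrightarrow> closed {(x, y::real). g x \<le> ereal y}"

definition convex_fun :: "(real \<Rightarrow> ereal) \<Rightarrow> bool" where
  "convex_fun g \<longleftrightarrow> (\<forall>x y t. 0 \<le> t \<and> t \<le> 1 \<longrightarrow>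
      g ((1 - t) * x + t * y) \<le> ereal (1 - t) * g x + ereal t * g y)"

definition subdiff :: "(real \<Rightarrow> ereal) \<Rightarrow> real \<Rightarrow> real set" where
  "subdiff g x = {v. \<forall>y. g x + ereal (v * (y - x)) \<le> g y}"

definition prox :: "real \<Rightarrow> (real \<Rightarrow> ereal) \<Rightarrow> real \<Rightarrow> real" where
  "prox \<gamma> g z = (THE x. \<forall>y. g x + ereal ((x - z)^2 / (2 * \<gamma>)) \<le> g y + ereal ((y - z)^2 / (2 * \<gamma>)))"

definition C2_near :: "(real \<Rightarrow> ereal) \<Rightarrow> real \<Rightarrow> bool" where
  "C2_near g x \<longleftrightarrow> (\<exists>e>0. \<exists>h h' h''. continuous_on (ball x e) h'' \<and>
      (\<forall>y\<in>ball x e. g y = ereal (h y) \<and> (h has_real_derivative h' y) (at y)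
                      \<and> (h' has_real_derivative h'' y) (at y)))"

definition coord_lip :: "(real^'n \<Rightarrow> real^'n) \<Rightarrow> 'n \<Rightarrow> real" where
  "coord_lip G j = Inf {L. 0 \<le> L \<and>
      (\<forall>x t. \<bar>G (x + t *\<^sub>R axis j 1) $ j - G x $ j\<bar> \<le> L * \<bar>t\<bar>)}"

definition psd_mat :: "real mat \<Rightarrow> bool" where
  "psd_mat R \<longleftrightarrow> (\<forall>v \<in> carrier_vec (dim_col R). 0 \<le> v \<bullet> (R *\<^sub>v v))"

definition sym_sqrt :: "nat \<Rightarrow> real mat \<Rightarrow> real mat" where
  "sym_sqrt n M = (THE R. R \<in> carrier_mat n n \<and> transpose_mat R = R \<and> psd_mat R \<and> R * R = M)"

definition spec_norm :: "real mat \<Rightarrow> real" where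
  "spec_norm A = Sup {sqrt ((A *\<^sub>v v) \<bullet> (A *\<^sub>v v)) | v. v \<in> carrier_vec (dim_col A) \<and> v \<bullet> v \<le> 1}"

end

theory Submission
  imports Defs "Jordan_Normal_Form.Char_Poly"
begin

lemma subgrad_local:
  fixes G :: "real \<Rightarrow> ereal" and h h' :: "real \<Rightarrow> real"
  assumes conv: "convex_fun G" and prp: "\<And>y. G y \<noteq> -\<infinity>"
    and hloc: "\<And>y. y \<in> ball x0 e \<Longrightarrow> G y = ereal (h y) \<and> (h has_real_derivative h' y) (at y)"
    and x: "x \<in> ball x0 e"
  shows "ereal (h x + h' x * (y - x)) \<le> G y"
proof (cases "G y = \<infinity>")
  case True
  then show ?thesis by simp
next
  case False
  then obtain gy where gy: "G y = ereal gy" using prp[of y] by (cases "G y") auto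
  show ?thesis
  proof (cases "y = x")
    case True
    then show ?thesis using hloc[OF x] gy by simp
  next
    case False
    define r where "r = e - dist x0 x"
    have r: "0 < r" unfolding r_def using x by simp
    define d where "d = min 1 (r / \<bar>y - x\<bar>)"
    have d: "0 < d" unfolding d_def using r False by simp
    define k where "k t = h (x + t * (y - x))" for t
    have kd: "(k has_real_derivative h' x * (y - x)) (at 0)"
    proof -
      have "((\<lambda>t. x + t * (y - x)) has_real_derivative (y - x)) (at 0)"
        by (auto intro!: derivative_eq_intros)
      moreover have "(h has_real_derivative h' x) (at (x + 0 * (y - x)))" using hloc[OF x] by simp
      ultimately show ?thesis unfolding k_def
        using DERIV_chain2[of h "h' x" "\<lambda>t. x + t * (y - x)" 0 "y - x"] by (simp add: mult.commute)
    qed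
    hence lim: "((\<lambda>t. (k t - k 0) / t) \<longlongrightarrow> h' x * (y - x)) (at_right 0)"
      unfolding has_field_derivative_iff by (auto intro: tendsto_mono[OF at_le])
    have ev: "eventually (\<lambda>t. (k t - k 0) / t \<le> gy - h x) (at_right 0)"
      using eventually_at_right_real[OF d]
    proof (rule eventually_mono)
      fix t assume t: "t \<in> {0<..<d}"
      have t1: "0 < t" "t < 1" using t unfolding d_def by auto
      have "t * \<bar>y - x\<bar> < r" using t False unfolding d_def by (auto simp: field_simps)
      moreover have "\<bar>t * (y - x)\<bar> = t * \<bar>y - x\<bar>" using t1 by (simp add: abs_mult)
      moreover have "\<bar>x0 - (x + t * (y - x))\<bar> \<le> \<bar>x0 - x\<bar> + \<bar>t * (y - x)\<bar>" by linarith
      ultimately have inb: "x + t * (y - x) \<in> ball x0 e" using x unfolding r_def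
        by (auto simp: dist_real_def)
      have "G ((1 - t) * x + t * y) \<le> ereal (1 - t) * G x + ereal t * G y"
        using conv t1 unfolding convex_fun_def by auto
      moreover have "(1 - t) * x + t * y = x + t * (y - x)" by (simp add: algebra_simps)
      ultimately have "ereal (k t) \<le> ereal ((1 - t) * h x + t * gy)"
        using hloc[OF inb] hloc[OF x] gy unfolding k_def by simp
      hence "k t \<le> (1 - t) * h x + t * gy" by simp
      hence "k t - k 0 \<le> t * (gy - h x)" unfolding k_def by (simp add: algebra_simps)
      thus "(k t - k 0) / t \<le> gy - h x" using t1 by (simp add: divide_le_eq mult.commute)
    qed
    have "h' x * (y - x) \<le> gy - h x"
      by (rule tendsto_upperbound[OF lim ev]) simp
    thus ?thesis using gy by simp
  qed
qed

lemma prox_local: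
  fixes G :: "real \<Rightarrow> ereal" and h h' h'' :: "real \<Rightarrow> real"
  assumes conv: "convex_fun G" and prp: "\<And>y. G y \<noteq> -\<infinity>" and gam: "0 < \<gamma>" and e: "0 < e"
    and hloc: "\<And>y. y \<in> ball x0 e \<Longrightarrow> G y = ereal (h y) \<and> (h has_real_derivative h' y) (at y)
                     \<and> (h' has_real_derivative h'' y) (at y)"
  shows "0 \<le> h'' x0" and "(prox \<gamma> G has_real_derivative inverse (1 + \<gamma> * h'' x0)) (at (x0 + \<gamma> * h' x0))"
proof -
  have sub: "ereal (h x + h' x * (y - x)) \<le> G y" if "x \<in> ball x0 e" for x y
    by (rule subgrad_local[OF conv prp _ that]) (use hloc in blast)
  have mono: "h' x1 \<le> h' x2" if x1: "x1 \<in> ball x0 e" and x2: "x2 \<in> ball x0 e" and le: "x1 \<le> x2" for x1 x2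
  proof (cases "x1 = x2")
    case False
    hence lt: "x1 < x2" using le by simp
    have "h x1 + h' x1 * (x2 - x1) \<le> h x2" using sub[OF x1, of x2] hloc[OF x2] by simp
    moreover have "h x2 + h' x2 * (x1 - x2) \<le> h x1" using sub[OF x2, of x1] hloc[OF x1] by simp
    ultimately have "(h' x1 - h' x2) * (x2 - x1) \<le> 0" by (simp add: algebra_simps)
    thus ?thesis using lt by (simp add: mult_le_0_iff)
  qed simp
  have x0b: "x0 \<in> ball x0 e" using e by simp
  show h''pos: "0 \<le> h'' x0"
  proof -
    have lim: "((\<lambda>y. (h' y - h' x0) / (y - x0)) \<longlongrightarrow> h'' x0) (at x0)"
      using hloc[OF x0b] unfolding has_field_derivative_iff by simp
    have ev: "eventually (\<lambda>y. 0 \<le> (h' y - h' x0) / (y - x0)) (at x0)"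
      unfolding eventually_at
    proof (intro exI[of _ e] conjI ballI impI)
      show "0 < e" by (rule e)
      fix y :: real assume "y \<in> UNIV" and y: "y \<noteq> x0 \<and> dist y x0 < e"
      hence yb: "y \<in> ball x0 e" by (simp add: dist_commute)
      show "0 \<le> (h' y - h' x0) / (y - x0)"
      proof (cases "y < x0")
        case True
        then show ?thesis using mono[OF yb x0b] by (simp add: zero_le_divide_iff)
      next
        case False
        then show ?thesis using mono[OF x0b yb] by (simp add: zero_le_divide_iff)
      qed
    qed
    show ?thesis by (rule tendsto_lowerbound[OF lim ev]) simp
  qed
  define \<psi> where "\<psi> y = y + \<gamma> * h' y" for y
  have psi_mono: "x2 - x1 \<le> \<psi> x2 - \<psi> x1" if "x1 \<in> ball x0 e" "x2 \<in> ball x0 e" "x1 \<le> x2" for x1 x2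
    using mono[OF that] gam unfolding \<psi>_def by (simp add: algebra_simps mult_left_mono)
  have prox_psi: "prox \<gamma> G (\<psi> x) = x" if x: "x \<in> ball x0 e" for x
  proof -
    define z where "z = \<psi> x"
    define \<Phi> where "\<Phi> y = G y + ereal ((y - z)^2 / (2 * \<gamma>))" for y
    define c0 where "c0 = h x + (x - z)^2 / (2 * \<gamma>)"
    have key: "ereal (c0 + (y - x)^2 / (2 * \<gamma>)) \<le> \<Phi> y" for y
    proof -
      have "c0 + (y - x)^2 / (2 * \<gamma>) = h x + h' x * (y - x) + (y - z)^2 / (2 * \<gamma>)"
        unfolding c0_def z_def \<psi>_def using gam by (simp add: field_simps power2_eq_square)
      hence "ereal (c0 + (y - x)^2 / (2 * \<gamma>)) = ereal (h x + h' x * (y - x)) + ereal ((y - z)^2 / (2 * \<gamma>))"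
        by simp
      also have "\<dots> \<le> \<Phi> y" unfolding \<Phi>_def by (rule add_right_mono[OF sub[OF x]])
      finally show ?thesis .
    qed
    have Phix: "\<Phi> x = ereal c0" unfolding \<Phi>_def c0_def using hloc[OF x] by simp
    have "prox \<gamma> G z = x" unfolding prox_def
    proof (rule the_equality)
      show "\<forall>y. G x + ereal ((x - z)^2 / (2 * \<gamma>)) \<le> G y + ereal ((y - z)^2 / (2 * \<gamma>))"
      proof
        fix y
        have "ereal c0 \<le> ereal (c0 + (y - x)^2 / (2 * \<gamma>))" using gam by simp
        also have "\<dots> \<le> \<Phi> y" by (rule key)
        finally show "G x + ereal ((x - z)^2 / (2 * \<gamma>)) \<le> G y + ereal ((y - z)^2 / (2 * \<gamma>))"
          using Phix unfolding \<Phi>_def by simp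
      qed
    next
      fix x' assume "\<forall>y. G x' + ereal ((x' - z)^2 / (2 * \<gamma>)) \<le> G y + ereal ((y - z)^2 / (2 * \<gamma>))"
      hence "\<Phi> x' \<le> \<Phi> x" unfolding \<Phi>_def by blast
      hence "ereal (c0 + (x' - x)^2 / (2 * \<gamma>)) \<le> ereal c0" using key[of x'] Phix by (metis order.trans)
      hence "(x' - x)^2 / (2 * \<gamma>) \<le> 0" by simp
      hence "(x' - x)^2 \<le> 0" using gam by (simp add: divide_le_0_iff)
      thus "x' = x" by simp
    qed
    thus ?thesis unfolding z_def .
  qed
  define d where "d = e / 2"
  have d: "0 < d" "d < e" unfolding d_def using e by auto
  have inball: "y \<in> ball x0 e" if "\<bar>y - x0\<bar> \<le> d" for y
    using that d by (auto simp: dist_real_def)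
  have psi_deriv: "(\<psi> has_real_derivative 1 + \<gamma> * h'' y) (at y)" if "y \<in> ball x0 e" for y
    unfolding \<psi>_def using hloc[OF that] by (auto intro!: derivative_eq_intros)
  have psi_cont: "isCont \<psi> y" if "y \<in> ball x0 e" for y
    using psi_deriv[OF that] by (rule DERIV_isCont)
  define a where "a = \<psi> (x0 - d)"
  define b where "b = \<psi> (x0 + d)"
  have ax: "a < \<psi> x0" unfolding a_def using psi_mono[OF inball inball, of "x0 - d" x0] d by simp
  have xb: "\<psi> x0 < b" unfolding b_def using psi_mono[OF inball inball, of x0 "x0 + d"] d by simp
  have inv: "\<psi> (prox \<gamma> G y) = y" if "a < y" "y < b" for y
  proof -
    have "\<exists>x. x0 - d \<le> x \<and> x \<le> x0 + d \<and> \<psi> x = y"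
      by (rule IVT) (use that d psi_cont inball in \<open>auto simp: a_def b_def\<close>)
    then obtain x where x: "x0 - d \<le> x" "x \<le> x0 + d" "\<psi> x = y" by blast
    have "x \<in> ball x0 e" using inball x by simp
    thus ?thesis using prox_psi x by metis
  qed
  have cont: "isCont (prox \<gamma> G) (\<psi> x0)"
    by (rule isCont_inverse_function[OF d(1)]) (use prox_psi psi_cont inball in auto)
  have "(prox \<gamma> G has_real_derivative inverse (1 + \<gamma> * h'' x0)) (at (\<psi> x0))"
  proof (rule DERIV_inverse_function[OF _ _ ax xb inv cont])
    show "(\<psi> has_real_derivative 1 + \<gamma> * h'' x0) (at (prox \<gamma> G (\<psi> x0)))"
      using prox_psi[OF x0b] psi_deriv[OF x0b] by simp
    show "1 + \<gamma> * h'' x0 \<noteq> 0" using h''pos gam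
      by (metis add_pos_nonneg less_numeral_extra(1) mult_nonneg_nonneg less_imp_le not_less zero_less_one)
  qed auto
  thus "(prox \<gamma> G has_real_derivative inverse (1 + \<gamma> * h'' x0)) (at (x0 + \<gamma> * h' x0))"
    unfolding \<psi>_def .
qed

lemma line_deriv:
  fixes f :: "real^'n \<Rightarrow> real"
  assumes "(f has_derivative (\<lambda>h. D \<bullet> h)) (at (x + t0 *\<^sub>R a))"
  shows "((\<lambda>t. f (x + t *\<^sub>R a)) has_real_derivative (D \<bullet> a)) (at t0)"
proof -
  have l: "((\<lambda>t. x + t *\<^sub>R a) has_derivative (\<lambda>t. t *\<^sub>R a)) (at t0)"
    by (auto intro!: derivative_eq_intros)
  have "((\<lambda>t. f (x + t *\<^sub>R a)) has_derivative (\<lambda>t. D \<bullet> (t *\<^sub>R a))) (at t0)"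
    using has_derivative_compose[OF l assms] by simp
  moreover have "(\<lambda>t. D \<bullet> (t *\<^sub>R a)) = (*) (D \<bullet> a)" by (auto simp: fun_eq_iff)
  ultimately show ?thesis unfolding has_field_derivative_def by simp
qed

lemma mat_axis_nth: "((H :: real^'n^'n) *v axis k 1) $ i = H $ i $ k"
  by (simp add: matrix_vector_mult_basis column_def)

lemma hess_diag_le_coord_lip:
  fixes grad :: "real^'n \<Rightarrow> real^'n" and H :: "real^'n^'n"
  assumes der: "(grad has_derivative (\<lambda>h. H *v h)) (at x)"
    and lip: "\<exists>L. L-lipschitz_on UNIV grad"
  shows "H $ j $ j \<le> coord_lip grad j"
proof -
  define Ls where "Ls = {L. 0 \<le> L \<and> (\<forall>x t. \<bar>grad (x + t *\<^sub>R axis j 1) $ j - grad x $ j\<bar> \<le> L * \<bar>t\<bar>)}"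
  obtain L0 where L0: "L0-lipschitz_on UNIV grad" using lip by blast
  have "L0 \<in> Ls" unfolding Ls_def
  proof (intro CollectI conjI allI)
    show "0 \<le> L0" using L0 by (rule lipschitz_on_nonneg)
    fix y :: "real^'n" and t :: real
    have "\<bar>grad (y + t *\<^sub>R axis j 1) $ j - grad y $ j\<bar> = \<bar>(grad (y + t *\<^sub>R axis j 1) - grad y) $ j\<bar>" by simp
    also have "\<dots> \<le> norm (grad (y + t *\<^sub>R axis j 1) - grad y)" by (rule component_le_norm_cart)
    also have "\<dots> \<le> L0 * norm ((y + t *\<^sub>R axis j 1) - y)" by (rule lipschitz_on_normD[OF L0]) auto
    also have "\<dots> = L0 * \<bar>t\<bar>" by simp
    finally show "\<bar>grad (y + t *\<^sub>R axis j 1) $ j - grad y $ j\<bar> \<le> L0 * \<bar>t\<bar>" .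
  qed
  hence ne: "Ls \<noteq> {}" by blast
  have gd: "((\<lambda>y. grad y \<bullet> axis j 1) has_derivative (\<lambda>h. (H *v h) \<bullet> axis j 1)) (at x)"
    using der by (auto intro!: derivative_eq_intros)
  have gd2: "((\<lambda>y. axis j 1 \<bullet> grad y) has_derivative (\<lambda>h. (H *v h) \<bullet> axis j 1)) (at x)"
    using gd by (simp add: inner_commute)
  have "((\<lambda>t. grad (x + t *\<^sub>R axis j 1) $ j) has_real_derivative H $ j $ j) (at 0)"
  proof -
    have l: "((\<lambda>t. x + t *\<^sub>R axis j (1::real)) has_derivative (\<lambda>t. t *\<^sub>R axis j 1)) (at 0)"
      by (auto intro!: derivative_eq_intros)
    have "((\<lambda>t. grad (x + t *\<^sub>R axis j 1) \<bullet> axis j 1) has_derivative (\<lambda>t. (H *v (t *\<^sub>R axis j 1)) \<bullet> axis j 1)) (at 0)"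
      using has_derivative_compose[OF l, of "\<lambda>y. grad y \<bullet> axis j 1"] gd by simp
    moreover have "(\<lambda>t. (H *v (t *\<^sub>R axis j 1)) \<bullet> axis j 1) = (*) (H $ j $ j)"
      by (auto simp: fun_eq_iff matrix_vector_mult_scaleR inner_axis mat_axis_nth)
    ultimately show ?thesis unfolding has_field_derivative_def by (simp add: inner_axis)
  qed
  hence lim: "((\<lambda>t. (grad (x + t *\<^sub>R axis j 1) $ j - grad x $ j) / t) \<longlongrightarrow> H $ j $ j) (at 0)"
    unfolding has_field_derivative_iff by simp
  have le: "H $ j $ j \<le> L" if L: "L \<in> Ls" for L
  proof -
    have ev: "eventually (\<lambda>t. (grad (x + t *\<^sub>R axis j 1) $ j - grad x $ j) / t \<le> L) (at 0)"
      unfolding eventually_at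
    proof (intro exI[of _ 1] conjI ballI impI)
      fix t :: real assume "t \<in> UNIV" and t: "t \<noteq> 0 \<and> dist t 0 < 1"
      have b: "\<bar>grad (x + t *\<^sub>R axis j 1) $ j - grad x $ j\<bar> \<le> L * \<bar>t\<bar>" using L unfolding Ls_def by blast
      have "(grad (x + t *\<^sub>R axis j 1) $ j - grad x $ j) / t \<le> \<bar>grad (x + t *\<^sub>R axis j 1) $ j - grad x $ j\<bar> / \<bar>t\<bar>"
        by (metis abs_divide abs_ge_self)
      also have "\<dots> \<le> L" using b t by (simp add: divide_le_eq)
      finally show "(grad (x + t *\<^sub>R axis j 1) $ j - grad x $ j) / t \<le> L" .
    qed simp
    show ?thesis by (rule tendsto_upperbound[OF lim ev]) simp
  qed
  have "H $ j $ j \<le> Inf Ls" by (rule cInf_greatest[OF ne]) (use le in auto)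
  thus ?thesis unfolding coord_lip_def Ls_def .
qed

lemma opt_coord:
  fixes f :: "real^'n \<Rightarrow> real" and grad :: "real^'n \<Rightarrow> real^'n" and g :: "'n \<Rightarrow> real \<Rightarrow> ereal"
    and h h' :: "real \<Rightarrow> real"
  assumes f_grad: "\<And>x. (f has_derivative (\<lambda>h. grad x \<bullet> h)) (at x)"
    and g_proper: "\<And>j. proper_fun (g j)"
    and xs_min: "\<And>x. ereal (f xs) + (\<Sum>j\<in>UNIV. g j (xs $ j)) \<le> ereal (f x) + (\<Sum>j\<in>UNIV. g j (x $ j))"
    and e: "0 < e"
    and hloc: "\<And>y. y \<in> ball (xs $ j) e \<Longrightarrow> g j y = ereal (h y) \<and> (h has_real_derivative h' y) (at y)"
  shows "h' (xs $ j) = - grad xs $ j"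
proof -
  have gm: "g i y \<noteq> -\<infinity>" for i y using g_proper[of i] unfolding proper_fun_def by blast
  define xh :: "real^'n" where "xh = (\<chi> i. SOME y. g i y \<noteq> \<infinity>)"
  have xh: "g i (xh $ i) \<noteq> \<infinity>" for i
  proof -
    have "\<exists>y. g i y \<noteq> \<infinity>" using g_proper[of i] unfolding proper_fun_def by blast
    hence "g i (SOME y. g i y \<noteq> \<infinity>) \<noteq> \<infinity>" by (rule someI_ex)
    thus ?thesis unfolding xh_def by simp
  qed
  have "(\<Sum>i\<in>UNIV. g i (xh $ i)) \<noteq> \<infinity>" using xh by (simp add: sum_Pinfty)
  hence "ereal (f xh) + (\<Sum>i\<in>UNIV. g i (xh $ i)) \<noteq> \<infinity>" by simp
  hence "ereal (f xs) + (\<Sum>i\<in>UNIV. g i (xs $ i)) \<noteq> \<infinity>" using xs_min[of xh]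
    by (metis ereal_infty_less_eq(1))
  hence "(\<Sum>i\<in>UNIV. g i (xs $ i)) \<noteq> \<infinity>" by auto
  hence fin: "g i (xs $ i) \<noteq> \<infinity>" for i by (simp add: sum_Pinfty)
  define c where "c i = real_of_ereal (g i (xs $ i))" for i
  have gc: "g i (xs $ i) = ereal (c i)" for i unfolding c_def using fin[of i] gm[of i "xs $ i"]
    by (cases "g i (xs $ i)") auto
  have cj: "c j = h (xs $ j)" using gc[of j] hloc[of "xs $ j"] e by simp
  define \<phi> where "\<phi> t = f (xs + t *\<^sub>R axis j 1) + h (xs $ j + t)" for t
  have loc: "\<phi> 0 \<le> \<phi> t" if t: "\<bar>0 - t\<bar> < e" for t
  proof -
    define x where "x = xs + t *\<^sub>R axis j 1"
    define c' where "c' i = (if i = j then h (xs $ j + t) else c i)" for i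
    have xi: "x $ i = (if i = j then xs $ j + t else xs $ i)" for i
      unfolding x_def by (simp add: axis_def)
    have inb: "xs $ j + t \<in> ball (xs $ j) e" using t by (simp add: dist_real_def)
    have "g i (x $ i) = ereal (c' i)" for i
      unfolding c'_def xi using gc hloc[OF inb] by simp
    hence s1: "(\<Sum>i\<in>UNIV. g i (x $ i)) = ereal (sum c' UNIV)" by simp
    have s0: "(\<Sum>i\<in>UNIV. g i (xs $ i)) = ereal (sum c UNIV)" using gc by simp
    have "f xs + sum c UNIV \<le> f x + sum c' UNIV" using xs_min[of x] unfolding s0 s1 by simp
    moreover have "sum c' UNIV - sum c UNIV = h (xs $ j + t) - c j"
    proof -
      have "sum c' UNIV - sum c UNIV = (\<Sum>i\<in>UNIV. c' i - c i)" by (simp add: sum_subtractf)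
      also have "\<dots> = (\<Sum>i\<in>UNIV. if i = j then h (xs $ j + t) - c j else 0)"
        by (rule sum.cong) (auto simp: c'_def)
      finally show ?thesis by simp
    qed
    ultimately show ?thesis unfolding \<phi>_def x_def cj by simp
  qed
  have d1: "((\<lambda>t. f (xs + t *\<^sub>R axis j 1)) has_real_derivative (grad xs \<bullet> axis j 1)) (at 0)"
    by (rule line_deriv) (use f_grad in simp)
  have d2: "((\<lambda>t. h (xs $ j + t)) has_real_derivative h' (xs $ j)) (at 0)"
  proof -
    have "(h has_real_derivative h' (xs $ j)) (at (xs $ j + 0))" using hloc[of "xs $ j"] e by simp
    moreover have "((\<lambda>t. xs $ j + t) has_real_derivative 1) (at 0)"
      by (auto intro!: derivative_eq_intros)
    ultimately show ?thesis using DERIV_chain2[of h "h' (xs $ j)" "\<lambda>t. xs $ j + t" 0 1] by simp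
  qed
  have "(\<phi> has_real_derivative (grad xs \<bullet> axis j 1 + h' (xs $ j))) (at 0)"
    unfolding \<phi>_def by (rule DERIV_add[OF d1 d2])
  hence "grad xs \<bullet> axis j 1 + h' (xs $ j) = 0"
    by (rule DERIV_local_min[OF _ e]) (use loc in blast)
  thus ?thesis by (simp add: inner_axis)
qed

lemma clairaut_est:
  fixes f :: "real^'n \<Rightarrow> real" and grad :: "real^'n \<Rightarrow> real^'n" and H :: "real^'n^'n"
  assumes f_grad: "\<And>x. (f has_derivative (\<lambda>h. grad x \<bullet> h)) (at x)"
    and der: "(grad has_derivative (\<lambda>h. H *v h)) (at x0)"
    and eps: "0 < \<epsilon>"
  shows "\<exists>\<delta>>0. \<forall>a b t. norm a = 1 \<longrightarrow> norm b = 1 \<longrightarrow> 0 < t \<longrightarrow> t < \<delta> \<longrightarrow>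
     \<bar>f (x0 + t *\<^sub>R b + t *\<^sub>R a) - f (x0 + t *\<^sub>R a) - f (x0 + t *\<^sub>R b) + f x0 - t^2 * ((H *v b) \<bullet> a)\<bar> \<le> 3 * \<epsilon> * t^2"
proof -
  obtain \<delta>0 where d0: "\<delta>0 > 0" and
    R: "\<And>y. norm (y - x0) < \<delta>0 \<Longrightarrow> norm (grad y - grad x0 - H *v (y - x0)) \<le> \<epsilon> * norm (y - x0)"
    using der eps unfolding has_derivative_at_alt by blast
  define \<delta> where "\<delta> = \<delta>0 / 2"
  have "\<delta> > 0" unfolding \<delta>_def using d0 by simp
  moreover have "\<bar>f (x0 + t *\<^sub>R b + t *\<^sub>R a) - f (x0 + t *\<^sub>R a) - f (x0 + t *\<^sub>R b) + f x0 - t^2 * ((H *v b) \<bullet> a)\<bar> \<le> 3 * \<epsilon> * t^2"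
    if a: "norm a = 1" and b: "norm b = 1" and t: "0 < t" "t < \<delta>" for a b t
  proof -
    define \<phi> where "\<phi> s = f ((x0 + t *\<^sub>R b) + s *\<^sub>R a) - f (x0 + s *\<^sub>R a)" for s
    define \<phi>' where "\<phi>' s = grad ((x0 + t *\<^sub>R b) + s *\<^sub>R a) \<bullet> a - grad (x0 + s *\<^sub>R a) \<bullet> a" for s
    have "DERIV \<phi> s :> \<phi>' s" for s
      unfolding \<phi>_def \<phi>'_def by (intro DERIV_diff line_deriv f_grad)
    then obtain \<sigma> where \<sigma>: "0 < \<sigma>" "\<sigma> < t" "\<phi> t - \<phi> 0 = (t - 0) * \<phi>' \<sigma>"
      using MVT2[OF t(1), of \<phi> \<phi>'] by blast
    define y1 where "y1 = x0 + t *\<^sub>R b + \<sigma> *\<^sub>R a"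
    define y2 where "y2 = x0 + \<sigma> *\<^sub>R a"
    define R1 where "R1 = grad y1 - grad x0 - H *v (y1 - x0)"
    define R2 where "R2 = grad y2 - grad x0 - H *v (y2 - x0)"
    have n1: "norm (y1 - x0) \<le> t + \<sigma>"
    proof -
      have "norm (y1 - x0) = norm (t *\<^sub>R b + \<sigma> *\<^sub>R a)" unfolding y1_def by (simp add: algebra_simps)
      also have "\<dots> \<le> norm (t *\<^sub>R b) + norm (\<sigma> *\<^sub>R a)" by (rule norm_triangle_ineq)
      also have "\<dots> = t + \<sigma>" using a b t \<sigma> by simp
      finally show ?thesis .
    qed
    have n2: "norm (y2 - x0) = \<sigma>" unfolding y2_def using a \<sigma> by simp
    have R1b: "norm R1 \<le> \<epsilon> * (2 * t)"
    proof -
      have "norm (y1 - x0) < \<delta>0" using n1 \<sigma> t unfolding \<delta>_def by simp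
      hence "norm R1 \<le> \<epsilon> * norm (y1 - x0)" unfolding R1_def by (rule R)
      also have "\<dots> \<le> \<epsilon> * (2 * t)" using n1 \<sigma> eps by (intro mult_left_mono) auto
      finally show ?thesis .
    qed
    have R2b: "norm R2 \<le> \<epsilon> * t"
    proof -
      have "norm (y2 - x0) < \<delta>0" using n2 \<sigma> t unfolding \<delta>_def by simp
      hence "norm R2 \<le> \<epsilon> * norm (y2 - x0)" unfolding R2_def by (rule R)
      also have "\<dots> \<le> \<epsilon> * t" using n2 \<sigma> eps by (intro mult_left_mono) auto
      finally show ?thesis .
    qed
    have "grad y1 - grad y2 = (R1 - R2) + t *\<^sub>R (H *v b)"
      unfolding R1_def R2_def y1_def y2_def by (simp add: algebra_simps)
    hence "(grad y1 - grad y2) \<bullet> a = ((R1 - R2) + t *\<^sub>R (H *v b)) \<bullet> a" by simp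
    hence phi': "\<phi>' \<sigma> = (R1 - R2) \<bullet> a + t * ((H *v b) \<bullet> a)"
      unfolding \<phi>'_def y1_def[symmetric] y2_def[symmetric] by (simp only: inner_diff_left inner_add_left inner_scaleR_left)
    have "\<bar>(R1 - R2) \<bullet> a\<bar> \<le> norm (R1 - R2) * norm a" by (rule Cauchy_Schwarz_ineq2)
    also have "\<dots> \<le> norm R1 + norm R2" using a by (simp add: norm_triangle_ineq4)
    also have "\<dots> \<le> 3 * \<epsilon> * t" using R1b R2b by simp
    finally have bnd: "\<bar>\<phi>' \<sigma> - t * ((H *v b) \<bullet> a)\<bar> \<le> 3 * \<epsilon> * t" unfolding phi' by simp
    have "f (x0 + t *\<^sub>R b + t *\<^sub>R a) - f (x0 + t *\<^sub>R a) - f (x0 + t *\<^sub>R b) + f x0 = \<phi> t - \<phi> 0"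
      unfolding \<phi>_def by simp
    also have "\<dots> = t * \<phi>' \<sigma>" using \<sigma> by simp
    finally have eq: "f (x0 + t *\<^sub>R b + t *\<^sub>R a) - f (x0 + t *\<^sub>R a) - f (x0 + t *\<^sub>R b) + f x0 - t^2 * ((H *v b) \<bullet> a)
        = t * (\<phi>' \<sigma> - t * ((H *v b) \<bullet> a))" by (simp add: algebra_simps power2_eq_square)
    have "\<bar>t * (\<phi>' \<sigma> - t * ((H *v b) \<bullet> a))\<bar> = t * \<bar>\<phi>' \<sigma> - t * ((H *v b) \<bullet> a)\<bar>" using t by (simp add: abs_mult)
    also have "\<dots> \<le> t * (3 * \<epsilon> * t)" using bnd t by (intro mult_left_mono) auto
    finally show ?thesis unfolding eq by (simp add: power2_eq_square mult_ac)
  qed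
  ultimately show ?thesis by blast
qed

lemma hess_sym:
  fixes f :: "real^'n \<Rightarrow> real" and grad :: "real^'n \<Rightarrow> real^'n" and H :: "real^'n^'n"
  assumes f_grad: "\<And>x. (f has_derivative (\<lambda>h. grad x \<bullet> h)) (at x)"
    and der: "(grad has_derivative (\<lambda>h. H *v h)) (at x0)"
  shows "H $ i $ k = H $ k $ i"
proof (rule ccontr)
  assume ne: "H $ i $ k \<noteq> H $ k $ i"
  define \<epsilon> where "\<epsilon> = \<bar>H $ i $ k - H $ k $ i\<bar> / 12"
  have eps: "0 < \<epsilon>" unfolding \<epsilon>_def using ne by simp
  obtain \<delta> where d: "\<delta> > 0" and est: "\<And>a b t. norm a = 1 \<Longrightarrow> norm b = 1 \<Longrightarrow> 0 < t \<Longrightarrow> t < \<delta> \<Longrightarrow>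
     \<bar>f (x0 + t *\<^sub>R b + t *\<^sub>R a) - f (x0 + t *\<^sub>R a) - f (x0 + t *\<^sub>R b) + f x0 - t^2 * ((H *v b) \<bullet> a)\<bar> \<le> 3 * \<epsilon> * t^2"
    using clairaut_est[OF f_grad der eps] by blast
  define t where "t = \<delta> / 2"
  have t: "0 < t" "t < \<delta>" unfolding t_def using d by auto
  define a :: "real^'n" where "a = axis i 1"
  define b :: "real^'n" where "b = axis k 1"
  define D where "D = f (x0 + t *\<^sub>R b + t *\<^sub>R a) - f (x0 + t *\<^sub>R a) - f (x0 + t *\<^sub>R b) + f x0"
  have D': "f (x0 + t *\<^sub>R a + t *\<^sub>R b) - f (x0 + t *\<^sub>R b) - f (x0 + t *\<^sub>R a) + f x0 = D"
    unfolding D_def by (simp add: add_ac)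
  have e1: "\<bar>D - t^2 * H $ i $ k\<bar> \<le> 3 * \<epsilon> * t^2"
    using est[of a b t] t unfolding D_def a_def b_def by (simp add: inner_axis mat_axis_nth)
  have e2: "\<bar>D - t^2 * H $ k $ i\<bar> \<le> 3 * \<epsilon> * t^2"
    using est[of b a t] t D' unfolding a_def b_def by (simp add: inner_axis mat_axis_nth)
  have "t^2 * \<bar>H $ i $ k - H $ k $ i\<bar> = \<bar>(D - t^2 * H $ k $ i) - (D - t^2 * H $ i $ k)\<bar>"
  proof -
    have "(D - t^2 * H $ k $ i) - (D - t^2 * H $ i $ k) = t^2 * (H $ i $ k - H $ k $ i)" by (simp add: algebra_simps)
    thus ?thesis by (simp add: abs_mult)
  qed
  also have "\<dots> \<le> 6 * \<epsilon> * t^2" using e1 e2 by linarith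
  finally have "t^2 * \<bar>H $ i $ k - H $ k $ i\<bar> \<le> t^2 * (6 * \<epsilon>)" by (simp add: mult_ac)
  hence "\<bar>H $ i $ k - H $ k $ i\<bar> \<le> 6 * \<epsilon>" using t by simp
  thus False using eps unfolding \<epsilon>_def by simp
qed

lemma real_sym_eigenvalue:
  fixes A :: "real mat"
  assumes A: "A \<in> carrier_mat n n" and sym: "transpose_mat A = A" and n: "0 < n"
  shows "\<exists>v e. v \<in> carrier_vec n \<and> v \<bullet> v = 1 \<and> A *\<^sub>v v = e \<cdot>\<^sub>v v"
proof -
  let ?Ac = "map_mat complex_of_real A"
  have Ac: "?Ac \<in> carrier_mat n n" using A by simp
  obtain as where cp: "char_poly ?Ac = (\<Prod>a\<leftarrow>as. [:- a, 1:])" and las: "length as = n"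
    using char_poly_factorized[OF Ac] by auto
  define a where "a = as ! 0"
  have "a \<in> set as" using las n unfolding a_def by auto
  hence "poly (char_poly ?Ac) a = 0" unfolding cp
    by (induct as) (auto simp: poly_prod_list)
  hence "eigenvalue ?Ac a" using eigenvalue_root_char_poly[OF Ac] by simp
  then obtain v where ev: "eigenvector ?Ac v a" unfolding eigenvalue_def by auto
  hence v: "v \<in> carrier_vec n" "v \<noteq> 0\<^sub>v n" "?Ac *\<^sub>v v = a \<cdot>\<^sub>v v"
    unfolding eigenvector_def using Ac by auto
  define s where "s = (\<Sum>i<n. \<Sum>j<n. cnj (v $ i) * complex_of_real (A $$ (i,j)) * v $ j)"
  define N where "N = (\<Sum>i<n. cnj (v $ i) * v $ i)"
  have "s = (\<Sum>i<n. cnj (v $ i) * (?Ac *\<^sub>v v) $ i)"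
    unfolding s_def using A v(1)
    by (auto simp: mult_mat_vec_def scalar_prod_def sum_distrib_left mult.assoc lessThan_atLeast0 intro!: sum.cong)
  also have "\<dots> = a * N" unfolding N_def v(3) using v(1)
    by (auto simp: sum_distrib_left intro!: sum.cong)
  finally have sN: "s = a * N" .
  have "cnj s = (\<Sum>i<n. \<Sum>j<n. v $ i * complex_of_real (A $$ (i,j)) * cnj (v $ j))"
    unfolding s_def by (simp add: cnj_sum)
  also have "\<dots> = (\<Sum>j<n. \<Sum>i<n. v $ i * complex_of_real (A $$ (i,j)) * cnj (v $ j))"
    by (rule sum.swap)
  also have "\<dots> = s" unfolding s_def
  proof (intro sum.cong refl)
    fix i j assume "i \<in> {..<n}" "j \<in> {..<n}"
    then have "A $$ (i,j) = A $$ (j,i)" using sym A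
      by (metis carrier_matD index_transpose_mat(1) lessThan_iff)
    then show "v $ j * complex_of_real (A $$ (j, i)) * cnj (v $ i) = cnj (v $ i) * complex_of_real (A $$ (i, j)) * v $ j"
      by simp
  qed
  finally have sreal: "cnj s = s" .
  have Nreal: "cnj N = N" unfolding N_def by (simp add: cnj_sum mult.commute)
  have "N \<noteq> 0"
  proof
    assume N0: "N = 0"
    have "Re N = (\<Sum>i<n. (Re (v $ i))^2 + (Im (v $ i))^2)" unfolding N_def
      by (simp add: Re_sum power2_eq_square)
    hence "(\<Sum>i<n. (Re (v $ i))^2 + (Im (v $ i))^2) = 0" using N0 by simp
    hence "\<forall>i\<in>{..<n}. (Re (v $ i))^2 + (Im (v $ i))^2 = 0" by (subst (asm) sum_nonneg_eq_0_iff) auto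
    hence "v = 0\<^sub>v n" using v(1) by (auto intro!: eq_vecI complex_eqI)
    thus False using v(2) by simp
  qed
  from sN have aeq: "a = s / N" using \<open>N \<noteq> 0\<close> by simp
  have "cnj a = cnj s / cnj N" unfolding aeq by (rule complex_cnj_divide)
  hence "cnj a = a" using sreal Nreal aeq by simp
  hence "Im a = 0" by (metis complex_cnj_cancel_iff complex_cnj_zero_iff diff_self Im_complex_div_eq_0 cnj.simps(2) add.inverse_inverse add_eq_0_iff2 neg_equal_zero)
  hence areal: "a = complex_of_real (Re a)" by (simp add: complex_eq_iff)
  have cpA: "char_poly ?Ac = map_poly complex_of_real (char_poly A)"
    by (rule of_real_hom.char_poly_hom[OF A])
  have "poly (map_poly complex_of_real (char_poly A)) (complex_of_real (Re a)) = 0"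
    using \<open>poly (char_poly ?Ac) a = 0\<close> cpA areal by simp
  hence "poly (char_poly A) (Re a) = 0" by (simp only: of_real_hom.poly_map_poly) simp
  hence "eigenvalue A (Re a)" using eigenvalue_root_char_poly[OF A] by simp
  then obtain w where "eigenvector A w (Re a)" unfolding eigenvalue_def by auto
  hence w: "w \<in> carrier_vec n" "w \<noteq> 0\<^sub>v n" "A *\<^sub>v w = Re a \<cdot>\<^sub>v w"
    unfolding eigenvector_def using A by auto
  have "\<exists>k<n. w $ k \<noteq> 0"
  proof (rule ccontr)
    assume "\<not> ?thesis"
    hence "w = 0\<^sub>v n" using w(1) by (auto intro!: eq_vecI)
    thus False using w(2) by simp
  qed
  then obtain k where k: "k < n" "w $ k \<noteq> 0" by auto
  have wpos: "w \<bullet> w > 0"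
  proof -
    have "w \<bullet> w = (\<Sum>i\<in>{0..<n}. (w $ i)^2)" using w(1) by (simp add: scalar_prod_def power2_eq_square)
    also have "\<dots> > 0" using k by (intro sum_pos2[of _ k]) auto
    finally show ?thesis .
  qed
  define u where "u = (1 / sqrt (w \<bullet> w)) \<cdot>\<^sub>v w"
  have "u \<in> carrier_vec n" unfolding u_def using w by simp
  moreover have "u \<bullet> u = 1" unfolding u_def using w(1) wpos
    by (simp add: power2_eq_square[symmetric])
  moreover have "A *\<^sub>v u = Re a \<cdot>\<^sub>v u" unfolding u_def
    using mult_mat_vec[OF A w(1)] w(3) by (simp add: smult_smult_assoc mult.commute)
  ultimately show ?thesis by blast
qed

unbundle no vec_syntax
unbundle no inner_syntax

lemma householder:
  fixes v :: "real vec"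
  assumes v: "v \<in> carrier_vec m" and v1: "v \<bullet> v = 1" and m: "0 < m"
  shows "\<exists>H \<in> carrier_mat m m. transpose_mat H = H \<and> H * H = 1\<^sub>m m \<and> H *\<^sub>v v = unit_vec m 0"
proof -
  define w where "w = v - unit_vec m 0"
  define c where "c = w \<bullet> w"
  define a where "a = 2 / c"
  define H where "H = mat m m (\<lambda>(i,j). (if i = j then 1 else 0) - a * w $ i * w $ j)"
  have w: "w \<in> carrier_vec m" unfolding w_def using v by simp
  have wi: "\<And>i. i < m \<Longrightarrow> w $ i = v $ i - (if i = 0 then 1 else 0)"
    unfolding w_def using v by (auto simp: unit_vec_def)
  have H: "H \<in> carrier_mat m m" unfolding H_def by simp
  have HT: "transpose_mat H = H" unfolding H_def by (auto intro!: eq_matI)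
  have wv: "w \<bullet> v = 1 - v $ 0" unfolding w_def using v v1 m
    by (simp add: minus_scalar_prod_distrib)
  have "w \<bullet> unit_vec m 0 = w $ 0" using w m by simp
  also have "\<dots> = v $ 0 - 1" using wi m by simp
  finally have we: "w \<bullet> unit_vec m 0 = v $ 0 - 1" .
  have "c = w \<bullet> v - w \<bullet> unit_vec m 0" unfolding c_def
    by (subst (1) w_def, rule scalar_prod_minus_distrib[OF w v]) simp
  hence c: "c = 2 - 2 * v $ 0" using wv we by simp
  have ac: "a * a * c = 2 * a" unfolding a_def by (cases "c = 0") (auto simp: field_simps power2_eq_square)
  have Hv: "(H *\<^sub>v x) $ i = x $ i - a * w $ i * (w \<bullet> x)" if x: "x \<in> carrier_vec m" and i: "i < m" for x i
  proof -
    have "(H *\<^sub>v x) $ i = (\<Sum>j\<in>{0..<m}. ((if i = j then 1 else 0) - a * w $ i * w $ j) * x $ j)"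
      unfolding H_def using x i by (simp add: scalar_prod_def)
    also have "\<dots> = (\<Sum>j\<in>{0..<m}. (if i = j then x $ j else 0) - a * w $ i * (w $ j * x $ j))"
      by (rule sum.cong) (auto simp: algebra_simps)
    also have "\<dots> = (\<Sum>j\<in>{0..<m}. (if i = j then x $ j else 0)) - a * w $ i * (\<Sum>j\<in>{0..<m}. w $ j * x $ j)"
      by (simp only: sum_subtractf sum_distrib_left)
    also have "\<dots> = x $ i - a * w $ i * (w \<bullet> x)" using i x w by (simp add: scalar_prod_def)
    finally show ?thesis .
  qed
  have HH: "H * H = 1\<^sub>m m"
  proof (rule eq_matI)
    fix i j assume i: "i < dim_row (1\<^sub>m m)" and j: "j < dim_col (1\<^sub>m m)"
    have "(H * H) $$ (i,j) = (H *\<^sub>v col H j) $ i" using H i j by simp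
    also have "\<dots> = col H j $ i - a * w $ i * (w \<bullet> col H j)" using Hv[of "col H j" i] H i j by simp
    also have "w \<bullet> col H j = w $ j - a * w $ j * c"
    proof -
      have "w \<bullet> col H j = (\<Sum>k\<in>{0..<m}. w $ k * ((if k = j then 1 else 0) - a * w $ k * w $ j))"
        unfolding H_def using i j w by (simp add: scalar_prod_def)
      also have "\<dots> = (\<Sum>k\<in>{0..<m}. (if k = j then w $ k else 0) - a * w $ j * (w $ k * w $ k))"
        by (rule sum.cong) (auto simp: algebra_simps)
      also have "\<dots> = (\<Sum>k\<in>{0..<m}. (if k = j then w $ k else 0)) - a * w $ j * (\<Sum>k\<in>{0..<m}. w $ k * w $ k)"
        by (simp only: sum_subtractf sum_distrib_left)
      also have "\<dots> = w $ j - a * w $ j * c" unfolding c_def using j w i by (simp add: scalar_prod_def)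
      finally show ?thesis .
    qed
    also have "col H j $ i - a * w $ i * (w $ j - a * w $ j * c) = (if i = j then 1 else 0) - 2 * a * w $ i * w $ j + (a * a * c) * w $ i * w $ j"
      unfolding H_def using i j by (simp add: algebra_simps)
    also have "\<dots> = 1\<^sub>m m $$ (i,j)" using i j by (simp add: ac)
    finally show "(H * H) $$ (i,j) = 1\<^sub>m m $$ (i,j)" .
  qed (use H in auto)
  have Hv0: "H *\<^sub>v v = unit_vec m 0"
  proof (cases "c = 0")
    case True
    hence "a = 0" unfolding a_def by simp
    have "w = 0\<^sub>v m"
    proof (rule eq_vecI)
      fix i assume "i < dim_vec (0\<^sub>v m)"
      hence i: "i < m" by simp
      have "(\<Sum>k\<in>{0..<m}. w $ k * w $ k) = 0" using True w unfolding c_def by (simp add: scalar_prod_def)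
      hence "\<forall>k\<in>{0..<m}. w $ k * w $ k = 0" by (subst (asm) sum_nonneg_eq_0_iff) auto
      thus "w $ i = 0\<^sub>v m $ i" using i by auto
    qed (use w in auto)
    have "v = unit_vec m 0"
    proof (rule eq_vecI)
      fix i assume "i < dim_vec (unit_vec m 0)"
      hence i: "i < m" by simp
      show "v $ i = unit_vec m 0 $ i" using wi[OF i] \<open>w = 0\<^sub>v m\<close> i by (auto simp: unit_vec_def)
    qed (use v in auto)
    show ?thesis
    proof (rule eq_vecI)
      fix i assume "i < dim_vec (unit_vec m 0)"
      hence i: "i < m" by simp
      have "(H *\<^sub>v v) $ i = v $ i - a * w $ i * (w \<bullet> v)" by (rule Hv[OF v i])
      thus "(H *\<^sub>v v) $ i = unit_vec m 0 $ i" using \<open>a = 0\<close> \<open>v = unit_vec m 0\<close> by simp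
    qed (use H in simp)
  next
    case False
    hence "a * (w \<bullet> v) = 1" unfolding a_def wv c by (auto simp: field_simps)
    note aw = this
    show ?thesis
    proof (rule eq_vecI)
      fix i assume "i < dim_vec (unit_vec m 0)"
      hence i: "i < m" by simp
      have "(H *\<^sub>v v) $ i = v $ i - a * w $ i * (w \<bullet> v)" by (rule Hv[OF v i])
      also have "\<dots> = v $ i - w $ i" using aw by (simp add: mult.commute mult.left_commute)
      finally show "(H *\<^sub>v v) $ i = unit_vec m 0 $ i" using wi[OF i] i by (simp add: unit_vec_def)
    qed (use H in simp)
  qed
  show ?thesis using H HT HH Hv0 by blast
qed

lemma ortho_mat_vec:
  fixes H :: "real mat"
  assumes H: "H \<in> carrier_mat m m" "transpose_mat H = H" "H * H = 1\<^sub>m m"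
    and x: "x \<in> carrier_vec m" and y: "y \<in> carrier_vec m"
  shows "(H *\<^sub>v x) \<bullet> (H *\<^sub>v y) = x \<bullet> y"
proof -
  have "(transpose_mat H *\<^sub>v (H *\<^sub>v x)) \<bullet> y = (H *\<^sub>v x) \<bullet> (H *\<^sub>v y)"
    by (rule transpose_vec_mult_scalar[OF H(1) y]) (use H x in simp)
  moreover have "transpose_mat H *\<^sub>v (H *\<^sub>v x) = x"
    using H x by (simp add: assoc_mult_mat_vec[symmetric, of H m m H m x])
  ultimately show ?thesis by simp
qed

lemma sym_mat_vec_scalar:
  fixes H :: "real mat"
  assumes H: "H \<in> carrier_mat m m" "transpose_mat H = H"
    and x: "x \<in> carrier_vec m" and y: "y \<in> carrier_vec m"
  shows "x \<bullet> (H *\<^sub>v y) = (H *\<^sub>v x) \<bullet> y"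
  using transpose_vec_mult_scalar[OF H(1) y x] H by simp

lemma sym_eigvecs:
  fixes A :: "real mat"
  assumes "A \<in> carrier_mat n n" "transpose_mat A = A"
  shows "\<exists>u d. (\<forall>i<n. u i \<in> carrier_vec n \<and> A *\<^sub>v u i = d i \<cdot>\<^sub>v u i) \<and>
               (\<forall>i<n. \<forall>j<n. u i \<bullet> u j = (if i = j then 1 else 0))"
  using assms
proof (induction n arbitrary: A)
  case 0
  then show ?case by auto
next
  case (Suc n)
  have A: "A \<in> carrier_mat (Suc n) (Suc n)" and sym: "transpose_mat A = A" by fact+
  obtain v e where v: "v \<in> carrier_vec (Suc n)" "v \<bullet> v = 1" "A *\<^sub>v v = e \<cdot>\<^sub>v v"
    using real_sym_eigenvalue[OF A sym] by auto
  obtain H where H: "H \<in> carrier_mat (Suc n) (Suc n)" "transpose_mat H = H" "H * H = 1\<^sub>m (Suc n)"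
    "H *\<^sub>v v = unit_vec (Suc n) 0"
    using householder[OF v(1,2)] by auto
  define C where "C = H * A * H"
  have C: "C \<in> carrier_mat (Suc n) (Suc n)" unfolding C_def using H A by simp
  have CT: "transpose_mat C = C"
  proof -
    have "transpose_mat C = transpose_mat H * transpose_mat (H * A)"
      unfolding C_def by (rule transpose_mult) (use H A in auto)
    also have "transpose_mat (H * A) = transpose_mat A * transpose_mat H"
      by (rule transpose_mult) (use H A in auto)
    finally show ?thesis unfolding C_def using H A sym
      by (simp add: assoc_mult_mat[of H _ _ A _ H])
  qed
  have Hu: "H *\<^sub>v unit_vec (Suc n) 0 = v"
    using H v by (metis assoc_mult_mat_vec one_mult_mat_vec)
  have HC: "H * C = A * H"
  proof -
    have "H * C = H * (H * (A * H))" unfolding C_def using H A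
      by (simp add: assoc_mult_mat)
    also have "\<dots> = (H * H) * (A * H)"
      by (rule assoc_mult_mat[symmetric]) (use H A in auto)
    also have "\<dots> = A * H" using H A by simp
    finally show ?thesis .
  qed
  have AH: "A *\<^sub>v (H *\<^sub>v y) = H *\<^sub>v (C *\<^sub>v y)" if y: "y \<in> carrier_vec (Suc n)" for y
    using H A C y HC by (metis assoc_mult_mat_vec)
  have Ce: "C *\<^sub>v unit_vec (Suc n) 0 = e \<cdot>\<^sub>v unit_vec (Suc n) 0"
  proof -
    have "C *\<^sub>v unit_vec (Suc n) 0 = (H * (A * H)) *\<^sub>v unit_vec (Suc n) 0"
      unfolding C_def using H A by (simp add: assoc_mult_mat)
    also have "\<dots> = H *\<^sub>v ((A * H) *\<^sub>v unit_vec (Suc n) 0)"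
      by (rule assoc_mult_mat_vec) (use H A in auto)
    also have "\<dots> = H *\<^sub>v (A *\<^sub>v (H *\<^sub>v unit_vec (Suc n) 0))"
      by (subst assoc_mult_mat_vec) (use H A in auto)
    also have "\<dots> = e \<cdot>\<^sub>v unit_vec (Suc n) 0" unfolding Hu v(3)
      using mult_mat_vec[OF H(1) v(1)] H(4) by simp
    finally show ?thesis .
  qed
  have Ci0: "C $$ (i, 0) = (if i = 0 then e else 0)" if i: "i < Suc n" for i
  proof -
    have "C $$ (i, 0) = (C *\<^sub>v unit_vec (Suc n) 0) $ i" using C i by simp
    also have "\<dots> = (if i = 0 then e else 0)" unfolding Ce using i by (simp add: unit_vec_def)
    finally show ?thesis .
  qed
  have Csym: "C $$ (i, j) = C $$ (j, i)" if "i < Suc n" "j < Suc n" for i j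
    using CT C that by (metis carrier_matD index_transpose_mat(1))
  have C0j: "C $$ (0, j) = (if j = 0 then e else 0)" if j: "j < Suc n" for j
    using Csym[OF _ j] Ci0[OF j] by simp
  define A3 where "A3 = mat n n (\<lambda>(i,j). C $$ (Suc i, Suc j))"
  have A3: "A3 \<in> carrier_mat n n" unfolding A3_def by simp
  have A3T: "transpose_mat A3 = A3" unfolding A3_def using Csym by (auto intro!: eq_matI)
  obtain u' d' where u': "\<forall>i<n. u' i \<in> carrier_vec n \<and> A3 *\<^sub>v u' i = d' i \<cdot>\<^sub>v u' i"
    "\<forall>i<n. \<forall>j<n. u' i \<bullet> u' j = (if i = j then 1 else 0)"
    using Suc.IH[OF A3 A3T] by blast
  define lift :: "real vec \<Rightarrow> real vec" where "lift x = vec (Suc n) (\<lambda>k. if k = 0 then 0 else x $ (k - 1))" for x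
  have lift_c: "lift x \<in> carrier_vec (Suc n)" for x unfolding lift_def by simp
  have lift_sc: "lift x \<bullet> lift y = x \<bullet> y" if "x \<in> carrier_vec n" "y \<in> carrier_vec n" for x y
    using that unfolding lift_def scalar_prod_def
    by (simp add: sum.atLeast0_lessThan_Suc_shift del: sum.op_ivl_Suc)
  have lift_smult: "lift (c \<cdot>\<^sub>v x) = c \<cdot>\<^sub>v lift x" if "x \<in> carrier_vec n" for c x
    using that unfolding lift_def by (auto intro!: eq_vecI)
  have lift_C: "C *\<^sub>v lift x = lift (A3 *\<^sub>v x)" if x: "x \<in> carrier_vec n" for x
  proof (rule eq_vecI)
    fix k assume "k < dim_vec (lift (A3 *\<^sub>v x))"
    hence k: "k < Suc n" unfolding lift_def by simp
    have "(C *\<^sub>v lift x) $ k = (\<Sum>l\<in>{0..<Suc n}. C $$ (k, l) * lift x $ l)"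
      using C k lift_c[of x] by (simp add: scalar_prod_def)
    also have "\<dots> = (\<Sum>l\<in>{0..<n}. C $$ (k, Suc l) * x $ l)"
      unfolding lift_def by (simp add: sum.atLeast0_lessThan_Suc_shift del: sum.op_ivl_Suc)
    also have "\<dots> = lift (A3 *\<^sub>v x) $ k"
    proof (cases k)
      case 0
      then show ?thesis using C0j unfolding lift_def by simp
    next
      case (Suc k')
      then show ?thesis using k x A3 unfolding lift_def A3_def by (simp add: scalar_prod_def)
    qed
    finally show "(C *\<^sub>v lift x) $ k = lift (A3 *\<^sub>v x) $ k" .
  qed (use C in \<open>simp add: lift_def\<close>)
  have e0lift: "unit_vec (Suc n) 0 \<bullet> lift x = 0" for x
    using lift_c[of x] by (simp add: lift_def)
  define u where "u i = (if i = 0 then v else H *\<^sub>v lift (u' (i - 1)))" for i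
  define d where "d i = (if i = 0 then e else d' (i - 1))" for i
  have uc: "u i \<in> carrier_vec (Suc n)" for i unfolding u_def using v H lift_c by auto
  have eig: "A *\<^sub>v u i = d i \<cdot>\<^sub>v u i" if i: "i < Suc n" for i
  proof (cases i)
    case 0
    then show ?thesis unfolding u_def d_def using v by simp
  next
    case (Suc i')
    hence i': "i' < n" using i by simp
    have "A *\<^sub>v u i = H *\<^sub>v (C *\<^sub>v lift (u' i'))" unfolding u_def using Suc AH lift_c by simp
    also have "\<dots> = H *\<^sub>v (d' i' \<cdot>\<^sub>v lift (u' i'))" using lift_C u' i' lift_smult by simp
    also have "\<dots> = d i \<cdot>\<^sub>v u i" unfolding u_def d_def using Suc mult_mat_vec[OF H(1) lift_c] by simp
    finally show ?thesis .
  qed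
  have v0: "v \<bullet> u j = 0" if "0 < j" "j < Suc n" for j
  proof -
    have "v \<bullet> (H *\<^sub>v lift (u' (j - 1))) = (H *\<^sub>v v) \<bullet> lift (u' (j - 1))"
      by (rule sym_mat_vec_scalar[OF H(1,2) v(1) lift_c])
    thus ?thesis unfolding u_def using that H(4) e0lift by simp
  qed
  have orth: "u i \<bullet> u j = (if i = j then 1 else 0)" if "i < Suc n" "j < Suc n" for i j
  proof (cases "i = 0")
    case True
    then show ?thesis using v0[of j] that v unfolding u_def by (cases "j = 0") auto
  next
    case False
    show ?thesis
    proof (cases "j = 0")
      case True
      then show ?thesis using v0[of i] that False comm_scalar_prod[OF uc[of i] uc[of 0]] by (simp add: u_def)
    next
      case False
      have "u i \<bullet> u j = lift (u' (i - 1)) \<bullet> lift (u' (j - 1))"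
        unfolding u_def using \<open>i \<noteq> 0\<close> False ortho_mat_vec[OF H(1-3) lift_c lift_c] by simp
      also have "\<dots> = u' (i - 1) \<bullet> u' (j - 1)" using lift_sc u' that \<open>i \<noteq> 0\<close> False by simp
      finally show ?thesis using u' that \<open>i \<noteq> 0\<close> False by auto
    qed
  qed
  show ?case using uc eig orth by blast
qed

definition diagm :: "nat \<Rightarrow> (nat \<Rightarrow> real) \<Rightarrow> real mat" where
  "diagm n d = mat n n (\<lambda>(i,j). if i = j then d i else 0)"

lemma diagm_carrier[simp]: "diagm n d \<in> carrier_mat n n" unfolding diagm_def by simp
lemma diagm_dims[simp]: "dim_row (diagm n d) = n" "dim_col (diagm n d) = n" unfolding diagm_def by simp_all

lemma diagm_mult_vec: "y \<in> carrier_vec n \<Longrightarrow> diagm n d *\<^sub>v y = vec n (\<lambda>i. d i * y $ i)"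
proof (rule eq_vecI)
  fix i assume y: "y \<in> carrier_vec n" and "i < dim_vec (vec n (\<lambda>i. d i * y $ i))"
  hence i: "i < n" by simp
  have "(diagm n d *\<^sub>v y) $ i = (\<Sum>k\<in>{0..<n}. (if i = k then d i else 0) * y $ k)"
    unfolding diagm_def using i y by (simp add: scalar_prod_def)
  also have "\<dots> = (\<Sum>k\<in>{0..<n}. (if i = k then d i * y $ k else 0))"
    by (rule sum.cong) auto
  also have "\<dots> = d i * y $ i" using i by simp
  finally show "(diagm n d *\<^sub>v y) $ i = vec n (\<lambda>i. d i * y $ i) $ i" using i by simp
qed (auto simp: diagm_def)

lemma diagm_mult: "diagm n d * diagm n e = diagm n (\<lambda>i. d i * e i)"
proof (rule eq_matI)
  fix i j assume "i < dim_row (diagm n (\<lambda>i. d i * e i))" "j < dim_col (diagm n (\<lambda>i. d i * e i))"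
  hence i: "i < n" and j: "j < n" by (auto simp: diagm_def)
  have "(diagm n d * diagm n e) $$ (i,j) = (\<Sum>k\<in>{0..<n}. (if i = k then d i else 0) * (if k = j then e k else 0))"
    using i j by (simp add: diagm_def scalar_prod_def)
  also have "\<dots> = (\<Sum>k\<in>{0..<n}. (if k = i then (if i = j then d i * e i else 0) else 0))"
    by (rule sum.cong) auto
  also have "\<dots> = diagm n (\<lambda>i. d i * e i) $$ (i,j)" using i j by (simp add: diagm_def)
  finally show "(diagm n d * diagm n e) $$ (i,j) = diagm n (\<lambda>i. d i * e i) $$ (i,j)" .
qed (auto simp: diagm_def)

lemma diagm_transpose[simp]: "transpose_mat (diagm n d) = diagm n d"
  unfolding diagm_def by (auto intro!: eq_matI)

lemma real_vec_sq_nonneg: "(x :: real vec) \<bullet> x \<ge> 0"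
  unfolding scalar_prod_def by (auto intro!: sum_nonneg)

lemma real_vec_sq_zero: assumes "(x :: real vec) \<in> carrier_vec n" "x \<bullet> x = 0" shows "x = 0\<^sub>v n"
proof (rule eq_vecI)
  fix i assume "i < dim_vec (0\<^sub>v n)"
  hence i: "i < n" by simp
  have "(\<Sum>k\<in>{0..<n}. x $ k * x $ k) = 0" using assms by (simp add: scalar_prod_def)
  hence "\<forall>k\<in>{0..<n}. x $ k * x $ k = 0" by (subst (asm) sum_nonneg_eq_0_iff) auto
  thus "x $ i = 0\<^sub>v n $ i" using i by auto
qed (use assms in auto)

lemma spectral_matrix:
  fixes G :: "real mat"
  assumes G: "G \<in> carrier_mat n n" "transpose_mat G = G"
  shows "\<exists>U d. U \<in> carrier_mat n n \<and> transpose_mat U * U = 1\<^sub>m n \<and> U * transpose_mat U = 1\<^sub>m n \<and>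
     (\<forall>i<n. G *\<^sub>v col U i = d i \<cdot>\<^sub>v col U i \<and> col U i \<bullet> col U i = 1) \<and>
     G = U * diagm n d * transpose_mat U"
proof -
  obtain u d where u: "\<forall>i<n. u i \<in> carrier_vec n \<and> G *\<^sub>v u i = d i \<cdot>\<^sub>v u i"
    "\<forall>i<n. \<forall>j<n. u i \<bullet> u j = (if i = j then 1 else 0)"
    using sym_eigvecs[OF G] by blast
  define U where "U = mat n n (\<lambda>(i,j). u j $ i)"
  have U: "U \<in> carrier_mat n n" unfolding U_def by simp
  have colU: "col U j = u j" if "j < n" for j
    using that u(1) unfolding U_def by (auto intro!: eq_vecI)
  have UTU: "transpose_mat U * U = 1\<^sub>m n"
  proof (rule eq_matI)
    fix i j assume "i < dim_row (1\<^sub>m n)" "j < dim_col (1\<^sub>m n)"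
    hence i: "i < n" and j: "j < n" by auto
    have "(transpose_mat U * U) $$ (i,j) = col U i \<bullet> col U j" using U i j by simp
    also have "\<dots> = 1\<^sub>m n $$ (i,j)" using colU i j u(2) by simp
    finally show "(transpose_mat U * U) $$ (i,j) = 1\<^sub>m n $$ (i,j)" .
  qed (use U in auto)
  have UUT: "U * transpose_mat U = 1\<^sub>m n"
    by (rule mat_mult_left_right_inverse[OF _ U UTU]) (use U in simp)
  have GU: "G * U = U * diagm n d"
  proof (rule eq_matI)
    fix i j assume "i < dim_row (U * diagm n d)" "j < dim_col (U * diagm n d)"
    hence i: "i < n" and j: "j < n" using U by (auto simp: diagm_def)
    have "(G * U) $$ (i,j) = (G *\<^sub>v col U j) $ i" using G U i j by simp
    also have "\<dots> = d j * u j $ i"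
    proof -
      have "u j \<in> carrier_vec n" "G *\<^sub>v u j = d j \<cdot>\<^sub>v u j" using u(1) j by auto
      thus ?thesis using colU[OF j] i by simp
    qed
    also have "\<dots> = (U *\<^sub>v col (diagm n d) j) $ i"
    proof -
      have "col (diagm n d) j = vec n (\<lambda>k. if k = j then d j else 0)"
        using j by (auto simp: diagm_def intro!: eq_vecI)
      hence "(U *\<^sub>v col (diagm n d) j) $ i = (\<Sum>k\<in>{0..<n}. U $$ (i,k) * (if k = j then d j else 0))"
        using U i by (simp add: scalar_prod_def)
      also have "\<dots> = (\<Sum>k\<in>{0..<n}. if k = j then U $$ (i,j) * d j else 0)"
        by (rule sum.cong) auto
      also have "\<dots> = d j * u j $ i" using j i by (simp add: U_def)
      finally show ?thesis by simp
    qed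
    also have "\<dots> = (U * diagm n d) $$ (i,j)" using U i j by (simp add: diagm_def)
    finally show "(G * U) $$ (i,j) = (U * diagm n d) $$ (i,j)" .
  qed (use G U in auto)
  have "G = G * (U * transpose_mat U)" using G UUT by simp
  also have "\<dots> = (G * U) * transpose_mat U" using G U by (simp add: assoc_mult_mat)
  also have "\<dots> = U * diagm n d * transpose_mat U" unfolding GU ..
  finally have Gdec: "G = U * diagm n d * transpose_mat U" .
  show ?thesis using U UTU UUT Gdec colU u by (intro exI[of _ U] exI[of _ d]) auto
qed

lemma quad_forms:
  fixes U G :: "real mat"
  assumes U: "U \<in> carrier_mat n n" "transpose_mat U * U = 1\<^sub>m n" "U * transpose_mat U = 1\<^sub>m n"
    and G: "G = U * diagm n d * transpose_mat U" and x: "x \<in> carrier_vec n"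
  shows "x \<bullet> x = (\<Sum>i\<in>{0..<n}. (col U i \<bullet> x)^2)"
    and "x \<bullet> (G *\<^sub>v x) = (\<Sum>i\<in>{0..<n}. d i * (col U i \<bullet> x)^2)"
proof -
  define y where "y = transpose_mat U *\<^sub>v x"
  have y: "y \<in> carrier_vec n" unfolding y_def using U x by simp
  have yi: "y $ i = col U i \<bullet> x" if "i < n" for i unfolding y_def using U that x by simp
  have Uy: "U *\<^sub>v y = x" unfolding y_def using U x
    by (metis U(3) assoc_mult_mat_vec one_mult_mat_vec transpose_carrier_mat)
  have key: "x \<bullet> (U *\<^sub>v z) = y \<bullet> z" if z: "z \<in> carrier_vec n" for z
    unfolding y_def using transpose_vec_mult_scalar[OF U(1) z x] by simp
  have "x \<bullet> x = y \<bullet> y" using key[OF y] Uy by simp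
  also have "\<dots> = (\<Sum>i\<in>{0..<n}. (col U i \<bullet> x)^2)" using y yi
    by (simp add: scalar_prod_def power2_eq_square)
  finally show "x \<bullet> x = (\<Sum>i\<in>{0..<n}. (col U i \<bullet> x)^2)" .
  have "G *\<^sub>v x = U *\<^sub>v (diagm n d *\<^sub>v y)" unfolding G y_def using U x
    by (simp add: assoc_mult_mat_vec[of _ n n _ n])
  moreover have "diagm n d *\<^sub>v y \<in> carrier_vec n" by (rule mult_mat_vec_carrier[OF diagm_carrier y])
  ultimately have "x \<bullet> (G *\<^sub>v x) = y \<bullet> (diagm n d *\<^sub>v y)" using key[of "diagm n d *\<^sub>v y"] by simp
  also have "\<dots> = (\<Sum>i\<in>{0..<n}. d i * (col U i \<bullet> x)^2)" using y yi
    by (simp add: diagm_mult_vec scalar_prod_def power2_eq_square mult.commute mult.left_commute)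
  finally show "x \<bullet> (G *\<^sub>v x) = (\<Sum>i\<in>{0..<n}. d i * (col U i \<bullet> x)^2)" .
qed

lemma conj_mult:
  fixes U P Q :: "real mat"
  assumes U: "U \<in> carrier_mat n n" "transpose_mat U * U = 1\<^sub>m n" and P: "P \<in> carrier_mat n n" and Q: "Q \<in> carrier_mat n n"
  shows "(U * P * transpose_mat U) * (U * Q * transpose_mat U) = U * (P * Q) * transpose_mat U"
proof -
  have UT: "transpose_mat U \<in> carrier_mat n n" using U by simp
  have e3: "transpose_mat U * (U * Q) = Q"
    using assoc_mult_mat[OF UT U(1) Q, symmetric] U Q by simp
  have e2: "transpose_mat U * (U * Q * transpose_mat U) = Q * transpose_mat U"
    using assoc_mult_mat[OF UT mult_carrier_mat[OF U(1) Q] UT, symmetric] e3 by simp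
  have "(U * P * transpose_mat U) * (U * Q * transpose_mat U) = (U * P) * (transpose_mat U * (U * Q * transpose_mat U))"
    by (rule assoc_mult_mat[OF mult_carrier_mat[OF U(1) P] UT mult_carrier_mat[OF mult_carrier_mat[OF U(1) Q] UT]])
  also have "\<dots> = (U * P) * (Q * transpose_mat U)" unfolding e2 ..
  also have "\<dots> = (U * P * Q) * transpose_mat U"
    by (rule assoc_mult_mat[OF mult_carrier_mat[OF U(1) P] Q UT, symmetric])
  also have "U * P * Q = U * (P * Q)" by (rule assoc_mult_mat[OF U(1) P Q])
  finally show ?thesis .
qed

lemma eig_nonneg:
  fixes M :: "real mat"
  assumes "M *\<^sub>v u = e \<cdot>\<^sub>v u" "u \<bullet> u = 1" "0 \<le> u \<bullet> (M *\<^sub>v u)" "u \<in> carrier_vec n"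
  shows "0 \<le> e"
  using assms by simp

lemma sqrt_eigvec:
  fixes R M :: "real mat"
  assumes R: "R \<in> carrier_mat n n" "psd_mat R" "R * R = M"
    and u: "u \<in> carrier_vec n" "M *\<^sub>v u = e \<cdot>\<^sub>v u" "R *\<^sub>v u \<in> carrier_vec n" and e: "0 \<le> e"
    and Rsym: "transpose_mat R = R"
  shows "R *\<^sub>v u = sqrt e \<cdot>\<^sub>v u"
proof -
  define t where "t = sqrt e"
  have t: "0 \<le> t" "t * t = e" unfolding t_def using e by auto
  define a where "a = R *\<^sub>v u"
  have a: "a \<in> carrier_vec n" unfolding a_def using R u by simp
  have Ra: "R *\<^sub>v a = e \<cdot>\<^sub>v u" unfolding a_def using R u
    by (metis assoc_mult_mat_vec)
  define y where "y = a - t \<cdot>\<^sub>v u"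
  have y: "y \<in> carrier_vec n" unfolding y_def using a u by simp
  have Ry: "R *\<^sub>v y = (- t) \<cdot>\<^sub>v y"
  proof -
    have "R *\<^sub>v y = R *\<^sub>v a - R *\<^sub>v (t \<cdot>\<^sub>v u)" unfolding y_def
      by (rule mult_minus_distrib_mat_vec[OF R(1) a]) (use u in simp)
    also have "\<dots> = e \<cdot>\<^sub>v u - t \<cdot>\<^sub>v a" using Ra mult_mat_vec[OF R(1) u(1), of t] unfolding a_def by simp
    also have "\<dots> = (- t) \<cdot>\<^sub>v y" unfolding y_def using a u t
      by (intro eq_vecI) (auto simp: algebra_simps)
    finally show ?thesis .
  qed
  have "0 \<le> y \<bullet> (R *\<^sub>v y)" using R(2) y R(1) unfolding psd_mat_def by auto
  hence yy: "0 \<le> - t * (y \<bullet> y)" unfolding Ry using y by simp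
  show ?thesis
  proof (cases "t = 0")
    case False
    hence "t > 0" using t by simp
    hence "y \<bullet> y \<le> 0" using yy by (simp add: mult_le_0_iff)
    hence "y \<bullet> y = 0" using real_vec_sq_nonneg[of y] by simp
    hence "y = 0\<^sub>v n" using real_vec_sq_zero[OF y] by simp
    show ?thesis
    proof (rule eq_vecI)
      fix i assume "i < dim_vec (sqrt e \<cdot>\<^sub>v u)"
      hence i: "i < n" using u by simp
      have "(a - t \<cdot>\<^sub>v u) $ i = 0" using \<open>y = 0\<^sub>v n\<close> i unfolding y_def by simp
      thus "(R *\<^sub>v u) $ i = (sqrt e \<cdot>\<^sub>v u) $ i" using a u i unfolding a_def t_def by simp
    qed (use R u in simp)
  next
    case True
    hence "e = 0" using t by simp
    have "a \<bullet> a = u \<bullet> (R *\<^sub>v a)" unfolding a_def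
      using sym_mat_vec_scalar[OF R(1) Rsym u(1) a] a_def by simp
    also have "\<dots> = 0" unfolding Ra \<open>e = 0\<close> using u by simp
    finally have "a = 0\<^sub>v n" using real_vec_sq_zero[OF a] by simp
    thus ?thesis unfolding a_def using True t_def u by auto
  qed
qed

lemma sym_sqrt_props:
  fixes M :: "real mat"
  assumes M: "M \<in> carrier_mat n n" "transpose_mat M = M" and psd: "\<forall>x\<in>carrier_vec n. 0 \<le> x \<bullet> (M *\<^sub>v x)"
  shows "sym_sqrt n M \<in> carrier_mat n n \<and> transpose_mat (sym_sqrt n M) = sym_sqrt n M \<and>
         sym_sqrt n M * sym_sqrt n M = M"
proof -
  obtain U d where U: "U \<in> carrier_mat n n" "transpose_mat U * U = 1\<^sub>m n" "U * transpose_mat U = 1\<^sub>m n"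
    and eig: "\<forall>i<n. M *\<^sub>v col U i = d i \<cdot>\<^sub>v col U i \<and> col U i \<bullet> col U i = 1"
    and Mdec: "M = U * diagm n d * transpose_mat U"
    using spectral_matrix[OF M] by blast
  have cU: "col U i \<in> carrier_vec n" for i using U by (auto simp: col_def)
  have dpos: "0 \<le> d i" if "i < n" for i
  proof -
    have "0 \<le> col U i \<bullet> (M *\<^sub>v col U i)" using psd cU by auto
    thus ?thesis using eig that cU[of i] by simp
  qed
  define S where "S = diagm n (\<lambda>i. sqrt (d i))"
  define R0 where "R0 = U * S * transpose_mat U"
  have R0: "R0 \<in> carrier_mat n n" unfolding R0_def S_def using U
    by (metis diagm_carrier mult_carrier_mat transpose_carrier_mat)
  have R0T: "transpose_mat R0 = R0"
  proof -
    have "transpose_mat R0 = transpose_mat (transpose_mat U) * transpose_mat (U * S)"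
      unfolding R0_def by (rule transpose_mult) (use U in \<open>auto simp: S_def\<close>)
    also have "transpose_mat (U * S) = transpose_mat S * transpose_mat U"
      by (rule transpose_mult) (use U in \<open>auto simp: S_def\<close>)
    finally show ?thesis unfolding R0_def S_def using U
      by (simp add: assoc_mult_mat[of U n n _ n])
  qed
  have SS: "S * S = diagm n d" unfolding S_def diagm_mult
    using dpos by (auto simp: diagm_def intro!: eq_matI)
  have R0R0: "R0 * R0 = M"
  proof -
    have "R0 * R0 = U * (S * S) * transpose_mat U" unfolding R0_def
      by (rule conj_mult[OF U(1,2)]) (auto simp: S_def)
    thus ?thesis unfolding SS Mdec .
  qed
  have R0psd: "psd_mat R0" unfolding psd_mat_def
  proof
    fix x :: "real vec" assume "x \<in> carrier_vec (dim_col R0)"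
    hence x: "x \<in> carrier_vec n" using R0 by simp
    have "x \<bullet> (R0 *\<^sub>v x) = (\<Sum>i\<in>{0..<n}. sqrt (d i) * (col U i \<bullet> x)^2)"
      by (rule quad_forms(2)[OF U R0_def[unfolded S_def] x])
    also have "\<dots> \<ge> 0" using dpos by (auto intro!: sum_nonneg)
    finally show "0 \<le> x \<bullet> (R0 *\<^sub>v x)" .
  qed
  have uniq: "R = R0" if R: "R \<in> carrier_mat n n" "transpose_mat R = R" "psd_mat R" "R * R = M" for R
  proof -
    have RU: "R * U = U * S"
    proof (rule eq_matI)
      fix i j assume "i < dim_row (U * S)" "j < dim_col (U * S)"
      hence i: "i < n" and j: "j < n" using U by (auto simp: S_def)
      have "col (R * U) j = R *\<^sub>v col U j" using R U j by simp
      also have "\<dots> = sqrt (d j) \<cdot>\<^sub>v col U j"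
        by (rule sqrt_eigvec[OF R(1,3,4) cU _ _ dpos[OF j] R(2)]) (use eig j R cU in auto)
      finally have colRU: "col (R * U) j = sqrt (d j) \<cdot>\<^sub>v col U j" .
      have "(R * U) $$ (i,j) = col (R * U) j $ i" using i j R U by simp
      also have "\<dots> = sqrt (d j) * U $$ (i,j)" unfolding colRU using i j U by simp
      finally have "(R * U) $$ (i,j) = sqrt (d j) * U $$ (i,j)" .
      also have "\<dots> = (U * S) $$ (i,j)"
      proof -
        have "(U * S) $$ (i,j) = (\<Sum>k\<in>{0..<n}. U $$ (i,k) * (if k = j then sqrt (d k) else 0))"
          using i j U by (simp add: S_def diagm_def scalar_prod_def)
        also have "\<dots> = (\<Sum>k\<in>{0..<n}. if k = j then U $$ (i,j) * sqrt (d j) else 0)"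
          by (rule sum.cong) auto
        finally show ?thesis using j by simp
      qed
      finally show "(R * U) $$ (i,j) = (U * S) $$ (i,j)" .
    qed (use U R in \<open>auto simp: S_def\<close>)
    have "R = R * (U * transpose_mat U)" using R U by simp
    also have "\<dots> = (R * U) * transpose_mat U" using R U by (simp add: assoc_mult_mat)
    finally show ?thesis unfolding RU R0_def .
  qed
  have "sym_sqrt n M = R0" unfolding sym_sqrt_def
  proof (rule the_equality)
    show "R0 \<in> carrier_mat n n \<and> transpose_mat R0 = R0 \<and> psd_mat R0 \<and> R0 * R0 = M"
      using R0 R0T R0psd R0R0 by blast
  next
    fix R assume "R \<in> carrier_mat n n \<and> transpose_mat R = R \<and> psd_mat R \<and> R * R = M"
    thus "R = R0" using uniq by blast
  qed
  thus ?thesis using R0 R0T R0R0 by simp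
qed

lemma spec_norm_lt1:
  fixes A :: "real mat"
  assumes A: "A \<in> carrier_mat n n"
    and contr: "\<forall>x\<in>carrier_vec n. x \<noteq> 0\<^sub>v n \<longrightarrow> (A *\<^sub>v x) \<bullet> (A *\<^sub>v x) < x \<bullet> x"
  shows "spec_norm A < 1"
proof -
  define G where "G = transpose_mat A * A"
  have G: "G \<in> carrier_mat n n" unfolding G_def using A by simp
  have GT: "transpose_mat G = G" unfolding G_def using A
    by (simp add: transpose_mult[of _ n n _ n])
  obtain U d where U: "U \<in> carrier_mat n n" "transpose_mat U * U = 1\<^sub>m n" "U * transpose_mat U = 1\<^sub>m n"
    and eig: "\<forall>i<n. G *\<^sub>v col U i = d i \<cdot>\<^sub>v col U i \<and> col U i \<bullet> col U i = 1"
    and Gdec: "G = U * diagm n d * transpose_mat U"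
    using spectral_matrix[OF G GT] by blast
  have cU: "col U i \<in> carrier_vec n" for i using U by (auto simp: col_def)
  have Gq: "x \<bullet> (G *\<^sub>v x) = (A *\<^sub>v x) \<bullet> (A *\<^sub>v x)" if x: "x \<in> carrier_vec n" for x
  proof -
    have "G *\<^sub>v x = transpose_mat A *\<^sub>v (A *\<^sub>v x)" unfolding G_def using A x
      by (simp add: assoc_mult_mat_vec[of _ n n _ n])
    hence "(G *\<^sub>v x) \<bullet> x = (A *\<^sub>v x) \<bullet> (A *\<^sub>v x)"
      using transpose_vec_mult_scalar[OF A x, of "A *\<^sub>v x"] A x by simp
    thus ?thesis using comm_scalar_prod[OF x, of "G *\<^sub>v x"] G x by simp
  qed
  have dlt: "d i < 1" if i: "i < n" for i
  proof -
    have u1: "col U i \<bullet> col U i = 1" using eig i by simp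
    have "col U i \<noteq> 0\<^sub>v n" using u1 by auto
    hence "(A *\<^sub>v col U i) \<bullet> (A *\<^sub>v col U i) < 1" using contr cU u1 by auto
    moreover have "col U i \<bullet> (G *\<^sub>v col U i) = d i" using eig i cU[of i] u1 by simp
    ultimately show ?thesis using Gq[OF cU] by simp
  qed
  define \<delta> where "\<delta> = Max (insert 0 (d ` {0..<n}))"
  have \<delta>: "0 \<le> \<delta>" "\<delta> < 1" "\<And>i. i < n \<Longrightarrow> d i \<le> \<delta>"
  proof -
    show "0 \<le> \<delta>" unfolding \<delta>_def by simp
    show "\<delta> < 1" unfolding \<delta>_def using dlt by auto
    fix i assume "i < n"
    hence "d i \<in> insert 0 (d ` {0..<n})" by auto
    thus "d i \<le> \<delta>" unfolding \<delta>_def by (intro Max_ge) auto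
  qed
  have bound: "(A *\<^sub>v x) \<bullet> (A *\<^sub>v x) \<le> \<delta>" if x: "x \<in> carrier_vec n" "x \<bullet> x \<le> 1" for x
  proof -
    have "(A *\<^sub>v x) \<bullet> (A *\<^sub>v x) = (\<Sum>i\<in>{0..<n}. d i * (col U i \<bullet> x)^2)"
      using Gq[OF x(1)] quad_forms(2)[OF U Gdec x(1)] by simp
    also have "\<dots> \<le> (\<Sum>i\<in>{0..<n}. \<delta> * (col U i \<bullet> x)^2)"
      using \<delta> by (intro sum_mono mult_right_mono) auto
    also have "\<dots> = \<delta> * (x \<bullet> x)" using quad_forms(1)[OF U Gdec x(1)] by (simp add: sum_distrib_left)
    also have "\<dots> \<le> \<delta>" using x \<delta> by (simp add: mult_left_le)
    finally show ?thesis .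
  qed
  have "spec_norm A \<le> sqrt \<delta>" unfolding spec_norm_def
  proof (rule cSup_least)
    show "{sqrt ((A *\<^sub>v v) \<bullet> (A *\<^sub>v v)) |v. v \<in> carrier_vec (dim_col A) \<and> v \<bullet> v \<le> 1} \<noteq> {}"
      using A by (auto intro!: exI[of _ "0\<^sub>v n"])
  next
    fix y assume "y \<in> {sqrt ((A *\<^sub>v v) \<bullet> (A *\<^sub>v v)) |v. v \<in> carrier_vec (dim_col A) \<and> v \<bullet> v \<le> 1}"
    then obtain v where "y = sqrt ((A *\<^sub>v v) \<bullet> (A *\<^sub>v v))" "v \<in> carrier_vec n" "v \<bullet> v \<le> 1" using A by auto
    thus "y \<le> sqrt \<delta>" using bound by auto
  qed
  also have "sqrt \<delta> < 1" using \<delta> by simp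
  finally show ?thesis .
qed

lemma rank1_step:
  fixes R :: "real mat" and c :: real
  assumes R: "R \<in> carrier_mat s s" "transpose_mat R = R" and a: "a < s"
    and x: "x \<in> carrier_vec s"
  defines "B \<equiv> mat s s (\<lambda>(i,k). c * R $$ (i,a) * R $$ (k,a))"
  shows "(1\<^sub>m s - B) *\<^sub>v x = x - (c * (col R a \<bullet> x)) \<cdot>\<^sub>v col R a"
    and "((1\<^sub>m s - B) *\<^sub>v x) \<bullet> ((1\<^sub>m s - B) *\<^sub>v x) =
         x \<bullet> x - c * (2 - c * (col R a \<bullet> col R a)) * (col R a \<bullet> x)^2"
proof -
  define r where "r = col R a"
  have r: "r \<in> carrier_vec s" unfolding r_def using R a by simp
  have Bx: "B *\<^sub>v x = (c * (r \<bullet> x)) \<cdot>\<^sub>v r"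
  proof (rule eq_vecI)
    fix i assume "i < dim_vec ((c * (r \<bullet> x)) \<cdot>\<^sub>v r)"
    hence i: "i < s" using r by simp
    have "(B *\<^sub>v x) $ i = (\<Sum>k\<in>{0..<s}. c * R $$ (i,a) * R $$ (k,a) * x $ k)"
      unfolding B_def using i x by (simp add: scalar_prod_def)
    also have "\<dots> = c * R $$ (i,a) * (\<Sum>k\<in>{0..<s}. R $$ (k,a) * x $ k)"
      by (simp add: sum_distrib_left mult.assoc)
    also have "\<dots> = ((c * (r \<bullet> x)) \<cdot>\<^sub>v r) $ i"
      unfolding r_def using i x R a by (simp add: scalar_prod_def)
    finally show "(B *\<^sub>v x) $ i = ((c * (r \<bullet> x)) \<cdot>\<^sub>v r) $ i" .
  qed (use r B_def in simp)
  have B: "B \<in> carrier_mat s s" unfolding B_def by simp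
  have "(1\<^sub>m s - B) *\<^sub>v x = 1\<^sub>m s *\<^sub>v x - B *\<^sub>v x"
    by (rule minus_mult_distrib_mat_vec[OF _ B x]) simp
  also have "\<dots> = x - (c * (r \<bullet> x)) \<cdot>\<^sub>v r" using x Bx by simp
  finally have eq: "(1\<^sub>m s - B) *\<^sub>v x = x - (c * (r \<bullet> x)) \<cdot>\<^sub>v r" .
  thus "(1\<^sub>m s - B) *\<^sub>v x = x - (c * (col R a \<bullet> x)) \<cdot>\<^sub>v col R a" unfolding r_def .
  define t where "t = c * (r \<bullet> x)"
  have rx: "r \<bullet> x = x \<bullet> r" using comm_scalar_prod[OF r x] .
  have "(x - t \<cdot>\<^sub>v r) \<bullet> (x - t \<cdot>\<^sub>v r) = x \<bullet> x - 2 * t * (r \<bullet> x) + t * t * (r \<bullet> r)"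
  proof -
    have "(x - t \<cdot>\<^sub>v r) \<bullet> (x - t \<cdot>\<^sub>v r) = x \<bullet> (x - t \<cdot>\<^sub>v r) - (t \<cdot>\<^sub>v r) \<bullet> (x - t \<cdot>\<^sub>v r)"
      by (rule minus_scalar_prod_distrib) (use x r in auto)
    also have "x \<bullet> (x - t \<cdot>\<^sub>v r) = x \<bullet> x - t * (x \<bullet> r)"
      using scalar_prod_minus_distrib[OF x x, of "t \<cdot>\<^sub>v r"] x r by simp
    also have "(t \<cdot>\<^sub>v r) \<bullet> (x - t \<cdot>\<^sub>v r) = t * (r \<bullet> x) - t * t * (r \<bullet> r)"
    proof -
      have h: "r \<bullet> (x - t \<cdot>\<^sub>v r) = r \<bullet> x - t * (r \<bullet> r)"
        using scalar_prod_minus_distrib[OF r x, of "t \<cdot>\<^sub>v r"] x r by simp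
      have "(t \<cdot>\<^sub>v r) \<bullet> (x - t \<cdot>\<^sub>v r) = t * (r \<bullet> (x - t \<cdot>\<^sub>v r))" using x r by simp
      thus ?thesis unfolding h by (simp add: algebra_simps)
    qed
    finally show ?thesis using rx by (simp add: algebra_simps)
  qed
  thus "((1\<^sub>m s - B) *\<^sub>v x) \<bullet> ((1\<^sub>m s - B) *\<^sub>v x) =
         x \<bullet> x - c * (2 - c * (col R a \<bullet> col R a)) * (col R a \<bullet> x)^2"
    unfolding eq t_def r_def[symmetric] by (simp add: algebra_simps power2_eq_square)
qed

lemma prod_contract:
  fixes R M :: "real mat" and c :: "nat \<Rightarrow> real"
  assumes R: "R \<in> carrier_mat s s" "transpose_mat R = R" "R * R = M"
    and pd: "\<forall>x\<in>carrier_vec s. x \<noteq> 0\<^sub>v s \<longrightarrow> 0 < x \<bullet> (M *\<^sub>v x)"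
    and c: "\<forall>a<s. 0 < c a \<and> c a * M $$ (a,a) \<le> 1"
  shows "spec_norm (foldl (\<lambda>P a. (1\<^sub>m s - mat s s (\<lambda>(i,k). c a * R $$ (i,a) * R $$ (k,a))) * P) (1\<^sub>m s) [0..<s]) < 1"
proof -
  define B where "B = (\<lambda>a. mat s s (\<lambda>(i,k). c a * R $$ (i,a) * R $$ (k,a)))"
  define F where "F m = foldl (\<lambda>P a. (1\<^sub>m s - B a) * P) (1\<^sub>m s) [0..<m]" for m
  have M: "M \<in> carrier_mat s s" using R by auto
  have colrow: "col R a = row R a" if "a < s" for a
    using R that by (metis carrier_matD(1) col_transpose)
  have rr: "col R a \<bullet> col R a = M $$ (a,a)" if a: "a < s" for a
  proof -
    have "M $$ (a,a) = row R a \<bullet> col R a" using R a by auto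
    thus ?thesis using colrow[OF a] by simp
  qed
  have Mpos: "0 < M $$ (a,a)" if a: "a < s" for a
  proof -
    have "unit_vec s a \<noteq> 0\<^sub>v s" using a by (metis index_unit_vec(1) index_zero_vec(1) zero_neq_one)
    hence "0 < unit_vec s a \<bullet> (M *\<^sub>v unit_vec s a)" using pd a by auto
    also have "unit_vec s a \<bullet> (M *\<^sub>v unit_vec s a) = M $$ (a,a)" using M a by simp
    finally show ?thesis .
  qed
  have kpos: "0 < c a * (2 - c a * (col R a \<bullet> col R a))" if a: "a < s" for a
  proof -
    have "c a * M $$ (a,a) \<le> 1" "0 < c a" using c a by auto
    thus ?thesis using rr[OF a] by simp
  qed
  have Fc: "F m \<in> carrier_mat s s" for m
    by (induct m) (auto simp: F_def B_def)
  have main: "\<forall>x\<in>carrier_vec s. (F m *\<^sub>v x) \<bullet> (F m *\<^sub>v x) \<le> x \<bullet> x \<and>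
      ((F m *\<^sub>v x) \<bullet> (F m *\<^sub>v x) = x \<bullet> x \<longrightarrow> F m *\<^sub>v x = x \<and> (\<forall>a<m. col R a \<bullet> x = 0))"
    if "m \<le> s" for m
    using that
  proof (induct m)
    case 0
    then show ?case by (simp add: F_def)
  next
    case (Suc m)
    show ?case
    proof
      fix x :: "real vec" assume x: "x \<in> carrier_vec s"
      have m: "m < s" using Suc by simp
      define y where "y = F m *\<^sub>v x"
      have y: "y \<in> carrier_vec s" unfolding y_def using Fc[of m] x by (rule mult_mat_vec_carrier)
      have FS: "F (Suc m) = (1\<^sub>m s - B m) * F m" unfolding F_def by simp
      have Bm: "1\<^sub>m s - B m \<in> carrier_mat s s" by (rule minus_carrier_mat) (simp add: B_def)
      have FSx: "F (Suc m) *\<^sub>v x = (1\<^sub>m s - B m) *\<^sub>v y" unfolding FS y_def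
        by (rule assoc_mult_mat_vec[OF Bm Fc x])
      have IH: "y \<bullet> y \<le> x \<bullet> x" "y \<bullet> y = x \<bullet> x \<longrightarrow> y = x \<and> (\<forall>a<m. col R a \<bullet> x = 0)"
        using Suc.hyps[OF order.strict_implies_order[OF m]] x unfolding y_def by auto
      have step: "((1\<^sub>m s - B m) *\<^sub>v y) \<bullet> ((1\<^sub>m s - B m) *\<^sub>v y) =
         y \<bullet> y - c m * (2 - c m * (col R m \<bullet> col R m)) * (col R m \<bullet> y)^2"
        unfolding B_def by (rule rank1_step(2)[OF R(1,2) m y])
      have step1: "(1\<^sub>m s - B m) *\<^sub>v y = y - (c m * (col R m \<bullet> y)) \<cdot>\<^sub>v col R m"
        unfolding B_def by (rule rank1_step(1)[OF R(1,2) m y])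
      have nn: "0 \<le> c m * (2 - c m * (col R m \<bullet> col R m)) * (col R m \<bullet> y)^2"
        using kpos[OF m] by simp
      show "(F (Suc m) *\<^sub>v x) \<bullet> (F (Suc m) *\<^sub>v x) \<le> x \<bullet> x \<and>
        ((F (Suc m) *\<^sub>v x) \<bullet> (F (Suc m) *\<^sub>v x) = x \<bullet> x \<longrightarrow>
          F (Suc m) *\<^sub>v x = x \<and> (\<forall>a<Suc m. col R a \<bullet> x = 0))"
      proof (intro conjI impI)
        show "(F (Suc m) *\<^sub>v x) \<bullet> (F (Suc m) *\<^sub>v x) \<le> x \<bullet> x"
          unfolding FSx step using nn IH by simp
      next
        assume eq: "(F (Suc m) *\<^sub>v x) \<bullet> (F (Suc m) *\<^sub>v x) = x \<bullet> x"
        hence "y \<bullet> y - c m * (2 - c m * (col R m \<bullet> col R m)) * (col R m \<bullet> y)^2 = x \<bullet> x"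
          unfolding FSx step .
        hence z: "c m * (2 - c m * (col R m \<bullet> col R m)) * (col R m \<bullet> y)^2 = 0" and yy: "y \<bullet> y = x \<bullet> x"
          using nn IH(1) by linarith+
        hence ry: "col R m \<bullet> y = 0" using kpos[OF m] by (metis mult_eq_0_iff less_irrefl zero_eq_power2)
        have yx: "y = x" and rest: "\<forall>a<m. col R a \<bullet> x = 0" using IH(2) yy by auto
        have "(1\<^sub>m s - B m) *\<^sub>v y = y" unfolding step1 ry using y R m by (intro eq_vecI) auto
        thus "F (Suc m) *\<^sub>v x = x" unfolding FSx yx by (simp add: yx)
        show "\<forall>a<Suc m. col R a \<bullet> x = 0" using rest ry yx less_Suc_eq by auto
      qed
    qed
  qed
  have contr: "\<forall>x\<in>carrier_vec s. x \<noteq> 0\<^sub>v s \<longrightarrow> (F s *\<^sub>v x) \<bullet> (F s *\<^sub>v x) < x \<bullet> x"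
  proof (intro ballI impI)
    fix x :: "real vec" assume x: "x \<in> carrier_vec s" and x0: "x \<noteq> 0\<^sub>v s"
    show "(F s *\<^sub>v x) \<bullet> (F s *\<^sub>v x) < x \<bullet> x"
    proof (rule ccontr)
      assume "\<not> ?thesis"
      hence "(F s *\<^sub>v x) \<bullet> (F s *\<^sub>v x) = x \<bullet> x" using main[of s] x by force
      hence orth: "\<forall>a<s. col R a \<bullet> x = 0" using main[of s] x by auto
      have Rx: "R *\<^sub>v x = 0\<^sub>v s"
      proof (rule eq_vecI)
        fix i assume "i < dim_vec (0\<^sub>v s)"
        hence i: "i < s" by simp
        have "(R *\<^sub>v x) $ i = row R i \<bullet> x" using R i by simp
        also have "\<dots> = 0" using orth colrow[OF i] i by metis
        finally show "(R *\<^sub>v x) $ i = 0\<^sub>v s $ i" using i by simp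
      qed (use R in simp)
      have "M *\<^sub>v x = R *\<^sub>v (R *\<^sub>v x)" using R x by (metis assoc_mult_mat_vec)
      also have "\<dots> = 0\<^sub>v s" unfolding Rx using R by (intro eq_vecI) (auto simp: scalar_prod_def)
      finally have "x \<bullet> (M *\<^sub>v x) = 0" using x by simp
      thus False using pd x x0 by auto
    qed
  qed
  have "spec_norm (F s) < 1" by (rule spec_norm_lt1[OF Fc contr])
  thus ?thesis unfolding F_def B_def .
qed

unbundle vec_syntax
unbundle inner_syntax

lemma mat_vec_sum: "(H :: real^'n^'m) *v (\<Sum>b\<in>B. f b) = (\<Sum>b\<in>B. H *v f b)"
  by (induct B rule: infinite_finite_induct) (simp_all add: matrix_vector_right_distrib)

lemma core:
  fixes H :: "real^('n::{finite,linorder})^('n::{finite,linorder})" and \<gamma> p :: "'n \<Rightarrow> real" and S :: "'n set"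
  assumes Hsym: "\<And>i k. H $ i $ k = H $ k $ i"
    and Hpd: "\<And>v. v \<noteq> 0 \<Longrightarrow> (\<forall>i. i \<notin> S \<longrightarrow> v $ i = 0) \<Longrightarrow> 0 < v \<bullet> (H *v v)"
    and pj: "\<And>j. j \<in> S \<Longrightarrow> 0 < \<gamma> j \<and> 0 < p j \<and> p j \<le> 1 \<and> \<gamma> j * H $ j $ j \<le> 1"
  shows "let js = sorted_list_of_set S;
         s = length js;
         u = (\<lambda>j. 1 / (\<gamma> j * p j) - 1 / \<gamma> j);
         M = mat s s (\<lambda>(a, b). H $ (js ! a) $ (js ! b) + (if a = b then u (js ! a) else 0));
         R = sym_sqrt s M;
         B = (\<lambda>a. mat s s (\<lambda>(i, k). \<gamma> (js ! a) * p (js ! a) * (R $$ (i, a)) * (R $$ (k, a))));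
         A = foldl (\<lambda>P a. (1\<^sub>m s - B a) * P) (1\<^sub>m s) [0..<s]
     in spec_norm A < 1"
proof -
  define js where "js = sorted_list_of_set S"
  define s where "s = length js"
  define u where "u = (\<lambda>j. 1 / (\<gamma> j * p j) - 1 / \<gamma> j)"
  define M where "M = mat s s (\<lambda>(a, b). H $ (js ! a) $ (js ! b) + (if a = b then u (js ! a) else 0))"
  define R where "R = sym_sqrt s M"
  have fin: "finite S" by simp
  have dist: "distinct js" unfolding js_def by simp
  have setjs: "set js = S" unfolding js_def by simp
  have jsS: "js ! a \<in> S" if "a < s" for a using that setjs unfolding s_def by auto
  have jsinj: "(js ! a = js ! b) = (a = b)" if "a < s" "b < s" for a b
    using that dist nth_eq_iff_index_eq unfolding s_def by blast
  have upos: "0 \<le> u (js ! a)" if a: "a < s" for a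
  proof -
    have "0 < \<gamma> (js ! a)" "0 < p (js ! a)" "p (js ! a) \<le> 1" using pj[OF jsS[OF a]] by auto
    thus ?thesis unfolding u_def by (simp add: field_simps)
  qed
  have M: "M \<in> carrier_mat s s" unfolding M_def by simp
  have MT: "transpose_mat M = M" unfolding M_def using Hsym by (auto intro!: eq_matI)
  have pd: "\<forall>x\<in>carrier_vec s. x \<noteq> 0\<^sub>v s \<longrightarrow> 0 < x \<bullet> (M *\<^sub>v x)"
  proof (intro ballI impI)
    fix x :: "real Matrix.vec" assume x: "x \<in> carrier_vec s" and x0: "x \<noteq> 0\<^sub>v s"
    define v :: "real^('n::{finite,linorder})" where "v = (\<Sum>a\<in>{0..<s}. (x $ a) *\<^sub>R axis (js ! a) 1)"
    have vj: "v $ (js ! b) = x $ b" if b: "b < s" for b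
    proof -
      have "v $ (js ! b) = (\<Sum>a\<in>{0..<s}. x $ a * (if js ! b = js ! a then 1 else 0))"
        unfolding v_def by (simp add: sum_component axis_def)
      also have "\<dots> = (\<Sum>a\<in>{0..<s}. if a = b then x $ a else 0)"
        by (rule sum.cong) (use jsinj b in auto)
      finally show ?thesis using b by simp
    qed
    have vS: "v $ i = 0" if "i \<notin> S" for i
      unfolding v_def using jsS that by (auto simp: sum_component axis_def intro!: sum.neutral)
    obtain b where b: "b < s" "x $ b \<noteq> 0" using x x0 by (metis carrier_vecD eq_vecI index_zero_vec(1,2))
    have "v \<noteq> 0" using vj[OF b(1)] b(2) by auto
    hence Hv: "0 < v \<bullet> (H *v v)" using Hpd vS by blast
    have qH: "v \<bullet> (H *v v) = (\<Sum>a\<in>{0..<s}. \<Sum>b\<in>{0..<s}. x $ a * H $ (js ! a) $ (js ! b) * x $ b)"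
    proof -
      have "H *v v = (\<Sum>b\<in>{0..<s}. x $ b *\<^sub>R (H *v axis (js ! b) 1))"
        unfolding v_def mat_vec_sum by (simp add: matrix_vector_mult_scaleR)
      hence "v \<bullet> (H *v v) = (\<Sum>b\<in>{0..<s}. \<Sum>a\<in>{0..<s}. x $ b * (x $ a * (axis (js ! a) 1 \<bullet> (H *v axis (js ! b) 1))))"
        unfolding v_def by (simp add: inner_sum_left inner_sum_right sum_distrib_left mult.assoc)
      also have "\<dots> = (\<Sum>a\<in>{0..<s}. \<Sum>b\<in>{0..<s}. x $ b * (x $ a * (axis (js ! a) 1 \<bullet> (H *v axis (js ! b) 1))))"
        by (rule sum.swap)
      also have "\<dots> = (\<Sum>a\<in>{0..<s}. \<Sum>b\<in>{0..<s}. x $ a * H $ (js ! a) $ (js ! b) * x $ b)"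
        by (intro sum.cong refl) (simp add: inner_axis' mat_axis_nth mult_ac)
      finally show ?thesis .
    qed
    have qM: "x \<bullet> (M *\<^sub>v x) = (\<Sum>a\<in>{0..<s}. \<Sum>b\<in>{0..<s}. x $ a * H $ (js ! a) $ (js ! b) * x $ b)
        + (\<Sum>a\<in>{0..<s}. u (js ! a) * (x $ a)^2)"
    proof -
      have "(M *\<^sub>v x) $ a = (\<Sum>b\<in>{0..<s}. H $ (js ! a) $ (js ! b) * x $ b) + u (js ! a) * x $ a" if a: "a < s" for a
      proof -
        have "(M *\<^sub>v x) $ a = (\<Sum>b\<in>{0..<s}. (H $ (js ! a) $ (js ! b) + (if a = b then u (js ! a) else 0)) * x $ b)"
          unfolding M_def using a x by (simp add: scalar_prod_def)
        also have "\<dots> = (\<Sum>b\<in>{0..<s}. H $ (js ! a) $ (js ! b) * x $ b) + (\<Sum>b\<in>{0..<s}. if a = b then u (js ! a) * x $ b else 0)"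
        proof -
          have "(\<Sum>b\<in>{0..<s}. (H $ (js ! a) $ (js ! b) + (if a = b then u (js ! a) else 0)) * x $ b)
              = (\<Sum>b\<in>{0..<s}. H $ (js ! a) $ (js ! b) * x $ b + (if a = b then u (js ! a) * x $ b else 0))"
            by (rule sum.cong) (auto simp: distrib_right)
          thus ?thesis by (simp only: sum.distrib)
        qed
        also have "\<dots> = (\<Sum>b\<in>{0..<s}. H $ (js ! a) $ (js ! b) * x $ b) + u (js ! a) * x $ a" using a by simp
        finally show ?thesis .
      qed
      hence "x \<bullet> (M *\<^sub>v x) = (\<Sum>a\<in>{0..<s}. x $ a * ((\<Sum>b\<in>{0..<s}. H $ (js ! a) $ (js ! b) * x $ b) + u (js ! a) * x $ a))"
        using x M by (simp add: scalar_prod_def)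
      also have "\<dots> = (\<Sum>a\<in>{0..<s}. \<Sum>b\<in>{0..<s}. x $ a * H $ (js ! a) $ (js ! b) * x $ b)
        + (\<Sum>a\<in>{0..<s}. u (js ! a) * (x $ a)^2)"
        by (simp add: distrib_left sum.distrib sum_distrib_left mult_ac power2_eq_square)
      finally show ?thesis .
    qed
    have "0 \<le> (\<Sum>a\<in>{0..<s}. u (js ! a) * (x $ a)^2)" using upos by (auto intro!: sum_nonneg)
    thus "0 < x \<bullet> (M *\<^sub>v x)" unfolding qM using Hv qH by simp
  qed
  have psd: "\<forall>x\<in>carrier_vec s. 0 \<le> x \<bullet> (M *\<^sub>v x)"
  proof
    fix x :: "real Matrix.vec" assume x: "x \<in> carrier_vec s"
    show "0 \<le> x \<bullet> (M *\<^sub>v x)"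
    proof (cases "x = 0\<^sub>v s")
      case True thus ?thesis using M by simp
    next
      case False thus ?thesis using pd x by auto
    qed
  qed
  have Rp: "R \<in> carrier_mat s s" "transpose_mat R = R" "R * R = M"
    using sym_sqrt_props[OF M MT psd] unfolding R_def by auto
  have c: "\<forall>a<s. 0 < \<gamma> (js ! a) * p (js ! a) \<and> \<gamma> (js ! a) * p (js ! a) * M $$ (a,a) \<le> 1"
  proof (intro allI impI conjI)
    fix a assume a: "a < s"
    have pa: "0 < \<gamma> (js ! a)" "0 < p (js ! a)" "p (js ! a) \<le> 1" "\<gamma> (js ! a) * H $ (js ! a) $ (js ! a) \<le> 1"
      using pj[OF jsS[OF a]] by auto
    show "0 < \<gamma> (js ! a) * p (js ! a)" using pa by simp
    have "M $$ (a,a) = H $ (js ! a) $ (js ! a) + u (js ! a)" unfolding M_def using a by simp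
    hence "\<gamma> (js ! a) * p (js ! a) * M $$ (a,a) = p (js ! a) * (\<gamma> (js ! a) * H $ (js ! a) $ (js ! a)) + 1 - p (js ! a)"
      unfolding u_def using pa by (simp add: field_simps)
    also have "\<dots> \<le> p (js ! a) * 1 + 1 - p (js ! a)" using pa by (intro add_right_mono diff_right_mono mult_left_mono) auto
    finally show "\<gamma> (js ! a) * p (js ! a) * M $$ (a,a) \<le> 1" by simp
  qed
  have "spec_norm (foldl (\<lambda>P a. (1\<^sub>m s - mat s s (\<lambda>(i,k). \<gamma> (js ! a) * p (js ! a) * R $$ (i,a) * R $$ (k,a))) * P) (1\<^sub>m s) [0..<s]) < 1"
    by (rule prod_contract[OF Rp pd c])
  thus ?thesis unfolding Let_def js_def[symmetric] s_def[symmetric] u_def[symmetric] M_def[symmetric] R_def[symmetric] .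
qed

theorem lemma8:
  fixes f :: "real^('n::{finite,linorder}) \<Rightarrow> real"
    and grad :: "real^('n::{finite,linorder}) \<Rightarrow> real^('n::{finite,linorder})"
    and hess :: "real^('n::{finite,linorder}) \<Rightarrow> real^('n::{finite,linorder})^('n::{finite,linorder})"
    and g :: "('n::{finite,linorder}) \<Rightarrow> real \<Rightarrow> ereal"
    and xs :: "real^('n::{finite,linorder})"
    and \<gamma> :: "('n::{finite,linorder}) \<Rightarrow> real"
  assumes f_convex: "convex_on UNIV f"
    and f_grad: "\<And>x. (f has_derivative (\<lambda>h. grad x \<bullet> h)) (at x)"
    and grad_lip: "\<exists>L. L-lipschitz_on UNIV grad"
    and g_proper: "\<And>j. proper_fun (g j)"
    and g_closed: "\<And>j. closed_fun (g j)"
    and g_convex: "\<And>j. convex_fun (g j)"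
    and xs_min: "\<And>x. ereal (f xs) + (\<Sum>j\<in>UNIV. g j (xs $ j)) \<le> ereal (f x) + (\<Sum>j\<in>UNIV. g j (x $ j))"
    and g_C2: "\<And>j. j \<in> {j. \<exists>v. subdiff (g j) (xs $ j) = {v}} \<Longrightarrow> C2_near (g j) (xs $ j)"
    and f_C2: "\<exists>e>0. continuous_on (ball xs e) hess \<and>
                 (\<forall>y\<in>ball xs e. (grad has_derivative (\<lambda>h. hess y *v h)) (at y))"
    and hess_pd: "\<And>v. v \<noteq> 0 \<Longrightarrow> (\<forall>i. i \<notin> {j. \<exists>v. subdiff (g j) (xs $ j) = {v}} \<longrightarrow> v $ i = 0)
                     \<Longrightarrow> 0 < v \<bullet> (hess xs *v v)"
    and step: "\<And>j. 0 < \<gamma> j \<and> \<gamma> j * coord_lip grad j \<le> 1"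
  shows
    "let S = {j. \<exists>v. subdiff (g j) (xs $ j) = {v}};
         js = sorted_list_of_set S;
         s = length js;
         z = (\<lambda>j. xs $ j - \<gamma> j * grad xs $ j);
         p = (\<lambda>j. deriv (prox (\<gamma> j) (g j)) (z j));
         u = (\<lambda>j. 1 / (\<gamma> j * p j) - 1 / \<gamma> j);
         M = mat s s (\<lambda>(a, b). hess xs $ (js ! a) $ (js ! b)
                               + (if a = b then u (js ! a) else 0));
         R = sym_sqrt s M;
         B = (\<lambda>a. mat s s (\<lambda>(i, k). \<gamma> (js ! a) * p (js ! a) * (R $$ (i, a)) * (R $$ (k, a))));
         A = foldl (\<lambda>P a. (1\<^sub>m s - B a) * P) (1\<^sub>m s) [0..<s]
     in spec_norm A < 1"
proof -
  obtain e0 where e0: "e0 > 0" "\<forall>y\<in>ball xs e0. (grad has_derivative (\<lambda>h. hess y *v h)) (at y)"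
    using f_C2 by blast
  have derxs: "(grad has_derivative (\<lambda>h. hess xs *v h)) (at xs)" using e0 by simp
  have Hsym: "\<And>i k. hess xs $ i $ k = hess xs $ k $ i" by (rule hess_sym[OF f_grad derxs])
  define p where "p j = deriv (prox (\<gamma> j) (g j)) (xs $ j - \<gamma> j * grad xs $ j)" for j
  have pj: "0 < \<gamma> j \<and> 0 < p j \<and> p j \<le> 1 \<and> \<gamma> j * hess xs $ j $ j \<le> 1"
    if jS: "j \<in> {j. \<exists>v. subdiff (g j) (xs $ j) = {v}}" for j
  proof -
    obtain e h h' h'' where e: "e > 0" and hl: "\<forall>y\<in>ball (xs $ j) e. g j y = ereal (h y) \<and>
        (h has_real_derivative h' y) (at y) \<and> (h' has_real_derivative h'' y) (at y)"
      using g_C2[OF jS] unfolding C2_near_def by blast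
    have gam: "0 < \<gamma> j" using step by blast
    have prp: "\<And>y. g j y \<noteq> -\<infinity>" using g_proper[of j] unfolding proper_fun_def by blast
    have hder: "0 \<le> h'' (xs $ j)"
      and pd: "(prox (\<gamma> j) (g j) has_real_derivative inverse (1 + \<gamma> j * h'' (xs $ j))) (at (xs $ j + \<gamma> j * h' (xs $ j)))"
      using prox_local[OF g_convex[of j] prp gam e, of "xs $ j" h h' h''] hl by blast+
    have opt: "h' (xs $ j) = - grad xs $ j"
      by (rule opt_coord[OF f_grad g_proper xs_min e, where h=h and h'=h']) (use hl in blast)
    have "xs $ j + \<gamma> j * h' (xs $ j) = xs $ j - \<gamma> j * grad xs $ j" using opt by simp
    hence "p j = inverse (1 + \<gamma> j * h'' (xs $ j))" unfolding p_def using DERIV_imp_deriv[OF pd] by simp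
    moreover have q1: "1 \<le> 1 + \<gamma> j * h'' (xs $ j)" using gam hder by simp
    moreover have "0 < inverse (1 + \<gamma> j * h'' (xs $ j))" using q1 by simp
    moreover have "inverse (1 + \<gamma> j * h'' (xs $ j)) \<le> 1" using q1 by (simp add: inverse_le_1_iff)
    ultimately have pp: "0 < p j" "p j \<le> 1" by simp_all
    have "hess xs $ j $ j \<le> coord_lip grad j" by (rule hess_diag_le_coord_lip[OF derxs grad_lip])
    hence "\<gamma> j * hess xs $ j $ j \<le> \<gamma> j * coord_lip grad j" using gam by simp
    also have "\<dots> \<le> 1" using step by blast
    finally show ?thesis using gam pp by simp
  qed
  have "let js = sorted_list_of_set {j. \<exists>v. subdiff (g j) (xs $ j) = {v}};
         s = length js;
         u = (\<lambda>j. 1 / (\<gamma> j * p j) - 1 / \<gamma> j);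
         M = mat s s (\<lambda>(a, b). hess xs $ (js ! a) $ (js ! b) + (if a = b then u (js ! a) else 0));
         R = sym_sqrt s M;
         B = (\<lambda>a. mat s s (\<lambda>(i, k). \<gamma> (js ! a) * p (js ! a) * (R $$ (i, a)) * (R $$ (k, a))));
         A = foldl (\<lambda>P a. (1\<^sub>m s - B a) * P) (1\<^sub>m s) [0..<s]
     in spec_norm A < 1"
    by (rule core[OF Hsym hess_pd pj])
  thus ?thesis unfolding Let_def p_def .
qed

end
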